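(* Let $q \geq 7$ be a prime power and let $\mathcal{X}$ be a plane curve of degree $q-1$ defined over $\mathbb{F}_q$ without $\mathbb{F}_q$-linear components with $\mathrm{N}_q(\mathcal{X}) = (q-1)^2$. If $k_0 \neq 0$, then $k_0 \geq 2$.
   Context: $\mathcal{X}(\mathbb{F}_q)=\mathcal{X}\cap\mathbb{P}^2(\mathbb{F}_q)$, $\mathrm{N}_q(\mathcal{X})=\#\mathcal{X}(\mathbb{F}_q)$; "without $\mathbb{F}_q$-linear components" means no line defined over $\mathbb{F}_q$ is a component. For $0\le i\le q+1$, $a_i$ is the number of $\mathbb{F}_q$-lines $l$ with $\#(l\cap\mathcal{X}(\mathbb{F}_q))=i$, and $k_0 := \min\{i : a_i \neq 0\}$. *)

theory Defs
  imports "HOL-Library.Cardinality"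
begin

text \<open>Ternary forms over a field: coefficient functions on exponent triples (i,j,k),
  standing for the monomial x^i y^j z^k.\<close>

type_synonym 'a form3 = "nat \<times> nat \<times> nat \<Rightarrow> 'a"

definition mdeg :: "nat \<times> nat \<times> nat \<Rightarrow> nat" where
  "mdeg e = (case e of (i,j,k) \<Rightarrow> i + j + k)"

definition homog_form :: "nat \<Rightarrow> ('a::zero) form3 \<Rightarrow> bool" where
  "homog_form d F \<longleftrightarrow> (\<forall>e. F e \<noteq> 0 \<longrightarrow> mdeg e = d)"

definition eval_form :: "nat \<Rightarrow> ('a::comm_ring_1) form3 \<Rightarrow> 'a \<times> 'a \<times> 'a \<Rightarrow> 'a" where
  "eval_form d F p = (case p of (x,y,z) \<Rightarrow>
     (\<Sum>(i,j,k)\<in>{..d}\<times>{..d}\<times>{..d}. F (i,j,k) * x^i * y^j * z^k))"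

definition mult_form :: "('a::comm_ring_1) form3 \<Rightarrow> 'a form3 \<Rightarrow> 'a form3" where
  "mult_form F G e = (case e of (i,j,k) \<Rightarrow>
     (\<Sum>(a,b,c)\<in>{..i}\<times>{..j}\<times>{..k}. F (a,b,c) * G (i-a, j-b, k-c)))"

definition lin_form :: "('a::zero) \<Rightarrow> 'a \<Rightarrow> 'a \<Rightarrow> 'a form3" where
  "lin_form a b c e = (if e = (1,0,0) then a else if e = (0,1,0) then b
                        else if e = (0,0,1) then c else 0)"

definition has_lin_component :: "nat \<Rightarrow> ('a::comm_ring_1) form3 \<Rightarrow> bool" where
  "has_lin_component d F \<longleftrightarrow>
     (\<exists>a b c G. (a,b,c) \<noteq> (0,0,0) \<and> homog_form (d - 1) G \<and> F = mult_form (lin_form a b c) G)"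

text \<open>Points of the projective plane over a finite field, as normalized representatives
  (first nonzero coordinate equal to 1). Lines use the same normalization of (a,b,c).\<close>
definition P2 :: "('a::field \<times> 'a \<times> 'a) set" where
  "P2 = {(x,y,z). x = 1 \<or> (x = 0 \<and> y = 1) \<or> (x = 0 \<and> y = 0 \<and> z = 1)}"

definition lines2 :: "('a::field \<times> 'a \<times> 'a) set" where
  "lines2 = P2"

definition on_line :: "('a::field \<times> 'a \<times> 'a) \<Rightarrow> 'a \<times> 'a \<times> 'a \<Rightarrow> bool" where
  "on_line l p = (case l of (a,b,c) \<Rightarrow> case p of (x,y,z) \<Rightarrow> a*x + b*y + c*z = 0)"

definition rat_points :: "nat \<Rightarrow> ('a::field) form3 \<Rightarrow> ('a \<times> 'a \<times> 'a) set" where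
  "rat_points d F = {p \<in> P2. eval_form d F p = 0}"

definition Nq :: "nat \<Rightarrow> ('a::field) form3 \<Rightarrow> nat" where
  "Nq d F = card (rat_points d F)"

definition a_count :: "nat \<Rightarrow> ('a::field) form3 \<Rightarrow> nat \<Rightarrow> nat" where
  "a_count d F i = card {l \<in> lines2. card {p \<in> rat_points d F. on_line l p} = i}"

definition k0 :: "nat \<Rightarrow> ('a::{field,finite}) form3 \<Rightarrow> nat" where
  "k0 d F = Min {i \<in> {0..card (UNIV :: 'a set) + 1}. a_count d F i \<noteq> 0}"

end

theory Submission
  imports Defs "HOL-Computational_Algebra.Polynomial"
begin


definition box :: "nat \<Rightarrow> (nat \<times> nat \<times> nat) set" where
  "box d = {..d} \<times> {..d} \<times> {..d}"

definition mono3 :: "nat \<times> nat \<times> nat \<Rightarrow> ('a::comm_ring_1) \<times> 'a \<times> 'a \<Rightarrow> 'a" where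
  "mono3 e v = (case e of (i,j,k) \<Rightarrow> case v of (x,y,z) \<Rightarrow> x^i * y^j * z^k)"

lemma finite_box[simp]: "finite (box d)"
  by (simp add: box_def)

lemma eval_form_alt: "eval_form d C v = (\<Sum>e\<in>box d. C e * mono3 e v)"
  unfolding eval_form_def box_def mono3_def
  by (cases v) (auto intro!: sum.cong simp: mult.assoc)

lemma eval_form_nested:
  "eval_form d C (x,y,z) = (\<Sum>i\<le>d. (\<Sum>j\<le>d. (\<Sum>k\<le>d. C(i,j,k) * z^k) * y^j) * x^i)"
  unfolding eval_form_def
  by (simp add: sum.cartesian_product[symmetric] sum_distrib_right sum_distrib_left mult_ac)

definition isform :: "nat \<Rightarrow> (('a::comm_ring_1) \<times> 'a \<times> 'a \<Rightarrow> 'a) \<Rightarrow> bool" where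
  "isform d \<phi> \<longleftrightarrow> (\<exists>C. homog_form d C \<and> \<phi> = eval_form d C)"

lemma isformI: "homog_form d C \<Longrightarrow> (\<And>v. \<phi> v = eval_form d C v) \<Longrightarrow> isform d \<phi>"
  unfolding isform_def by (intro exI[of _ C]) auto

lemma isform_zero: "isform d (\<lambda>_. 0)"
  by (rule isformI[of d "\<lambda>_. 0"]) (auto simp: homog_form_def eval_form_alt)

lemma isform_add: "isform d \<phi> \<Longrightarrow> isform d \<psi> \<Longrightarrow> isform d (\<lambda>v. \<phi> v + \<psi> v)"
  unfolding isform_def
  apply (elim exE conjE)
  subgoal for C C'
    apply (rule exI[of _ "\<lambda>e. C e + C' e"])
    apply (auto simp: homog_form_def eval_form_alt sum.distrib algebra_simps)
    by (metis add.right_neutral)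
  done

lemma isform_smult: "isform d \<phi> \<Longrightarrow> isform d (\<lambda>v. a * \<phi> v)"
  unfolding isform_def
  apply (elim exE conjE)
  subgoal for C
    apply (rule exI[of _ "\<lambda>e. a * C e"])
    apply (auto simp: homog_form_def eval_form_alt sum_distrib_left algebra_simps)
    by (metis mult_zero_right)
  done

lemma isform_sum: "finite A \<Longrightarrow> (\<And>a. a \<in> A \<Longrightarrow> isform d (f a)) \<Longrightarrow> isform d (\<lambda>v. \<Sum>a\<in>A. f a v)"
  by (induction A rule: finite_induct) (auto intro: isform_zero isform_add)

lemma isform_const: "isform 0 (\<lambda>_. a)"
  by (rule isformI[of 0 "\<lambda>e. if e = (0,0,0) then a else 0"])
     (auto simp: homog_form_def mdeg_def eval_form_def)

lemma isform_lin: "isform 1 (\<lambda>(x,y,z). a*x + b*y + c*z)"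
  apply (rule isformI[of 1 "lin_form a b c"])
   apply (auto simp: homog_form_def mdeg_def lin_form_def split: if_splits)
  apply (simp add: eval_form_nested lin_form_def)
  done

definition add3 :: "nat \<times> nat \<times> nat \<Rightarrow> nat \<times> nat \<times> nat \<Rightarrow> nat \<times> nat \<times> nat" where
  "add3 e f = (case e of (i,j,k) \<Rightarrow> case f of (i',j',k') \<Rightarrow> (i+i',j+j',k+k'))"

definition prodc :: "nat \<Rightarrow> nat \<Rightarrow> ('a::comm_ring_1) form3 \<Rightarrow> 'a form3 \<Rightarrow> 'a form3" where
  "prodc a b C C' e = (\<Sum>p\<in>{p\<in>box a \<times> box b. add3 (fst p) (snd p) = e}. C (fst p) * C' (snd p))"

lemma mono3_add3: "mono3 (add3 e f) v = mono3 e v * mono3 f v"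
  unfolding mono3_def add3_def by (auto split: prod.splits simp: power_add)

lemma mdeg_add3: "mdeg (add3 e f) = mdeg e + mdeg f"
  unfolding mdeg_def add3_def by (auto split: prod.splits)

lemma add3_box: "e \<in> box a \<Longrightarrow> f \<in> box b \<Longrightarrow> add3 e f \<in> box (a+b)"
  unfolding box_def add3_def by (auto split: prod.splits)

lemma homog_prodc:
  assumes "homog_form a C" "homog_form b C'"
  shows "homog_form (a+b) (prodc a b C C')"
  unfolding homog_form_def
proof (intro allI impI)
  fix e assume "prodc a b C C' e \<noteq> 0"
  then obtain p where p: "p \<in> box a \<times> box b" "add3 (fst p) (snd p) = e" "C (fst p) * C' (snd p) \<noteq> 0"
    unfolding prodc_def by (rule sum.not_neutral_contains_not_neutral) auto
  have "C (fst p) \<noteq> 0" "C' (snd p) \<noteq> 0" using p(3) by auto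
  then have "mdeg (fst p) = a" "mdeg (snd p) = b" using assms unfolding homog_form_def by blast+
  then show "mdeg e = a + b" using p mdeg_add3 by metis
qed

lemma eval_prodc:
  "eval_form (a+b) (prodc a b C C') v = eval_form a C v * eval_form b C' v"
proof -
  have "eval_form a C v * eval_form b C' v = (\<Sum>p\<in>box a \<times> box b. C (fst p) * C' (snd p) * mono3 (add3 (fst p) (snd p)) v)"
    unfolding eval_form_alt sum_product sum.cartesian_product
    by (rule sum.cong) (auto simp: mono3_add3 mult_ac)
  also have "\<dots> = (\<Sum>e\<in>box (a+b). \<Sum>p\<in>{p\<in>box a \<times> box b. add3 (fst p) (snd p) = e}. C (fst p) * C' (snd p) * mono3 (add3 (fst p) (snd p)) v)"
    by (rule sum.group[symmetric]) (auto intro: add3_box)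
  also have "\<dots> = eval_form (a+b) (prodc a b C C') v"
    unfolding eval_form_alt prodc_def sum_distrib_right
    by (intro sum.cong refl) auto
  finally show ?thesis by simp
qed

lemma isform_mult: "isform a \<phi> \<Longrightarrow> isform b \<psi> \<Longrightarrow> isform (a+b) (\<lambda>v. \<phi> v * \<psi> v)"
  unfolding isform_def
  apply (elim exE conjE)
  subgoal for C C'
    apply (rule exI[of _ "prodc a b C C'"])
    by (auto simp: homog_prodc eval_prodc)
  done

lemma isform_power: "isform 1 \<phi> \<Longrightarrow> isform n (\<lambda>v. \<phi> v ^ n)"
proof (induction n)
  case 0 then show ?case using isform_const[of 1] by simp
next
  case (Suc n)
  then show ?case using isform_mult[of 1 \<phi> n "\<lambda>v. \<phi> v ^ n"] by simp
qed

subsection \<open>Vectors and linear substitutions\<close>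

definition sc :: "'a::comm_ring_1 \<Rightarrow> 'a \<times> 'a \<times> 'a \<Rightarrow> 'a \<times> 'a \<times> 'a" where
  "sc s v = (case v of (x,y,z) \<Rightarrow> (s*x, s*y, s*z))"

definition dot :: "'a::comm_ring_1 \<times> 'a \<times> 'a \<Rightarrow> 'a \<times> 'a \<times> 'a \<Rightarrow> 'a" where
  "dot l v = (case l of (a,b,c) \<Rightarrow> case v of (x,y,z) \<Rightarrow> a*x+b*y+c*z)"

definition colmat :: "'a::comm_ring_1 \<times> 'a \<times> 'a \<Rightarrow> 'a \<times> 'a \<times> 'a \<Rightarrow> 'a \<times> 'a \<times> 'a \<Rightarrow> 'a \<times> 'a \<times> 'a \<Rightarrow> 'a \<times> 'a \<times> 'a" where
  "colmat A B C v = (case A of (a1,a2,a3) \<Rightarrow> case B of (b1,b2,b3) \<Rightarrow> case C of (c1,c2,c3) \<Rightarrow>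
     case v of (x,y,z) \<Rightarrow> (x*a1+y*b1+z*c1, x*a2+y*b2+z*c2, x*a3+y*b3+z*c3))"

lemma sc_simp[simp]: "sc s (x,y,z) = (s*x, s*y, s*z)" by (simp add: sc_def)
lemma dot_simp[simp]: "dot (a,b,c) (x,y,z) = a*x+b*y+c*z" by (simp add: dot_def)
lemma colmat_simp[simp]: "colmat (a1,a2,a3) (b1,b2,b3) (c1,c2,c3) (x,y,z) =
   (x*a1+y*b1+z*c1, x*a2+y*b2+z*c2, x*a3+y*b3+z*c3)" by (simp add: colmat_def)

lemma isform_dot: "isform 1 (\<lambda>v. dot l v)"
proof -
  obtain a b c where l: "l = (a,b,c)" by (cases l) auto
  have "(\<lambda>v. dot l v) = (\<lambda>(x,y,z). a*x + b*y + c*z)" by (auto simp: l)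
  then show ?thesis using isform_lin by metis
qed

lemma isform_subst:
  assumes "isform d \<phi>"
  shows "isform d (\<lambda>v. \<phi> (colmat A B C v))"
proof -
  obtain Cf where hC: "homog_form d Cf" and phi: "\<phi> = eval_form d Cf"
    using assms unfolding isform_def by auto
  obtain a1 a2 a3 where A: "A = (a1,a2,a3)" by (cases A) auto
  obtain b1 b2 b3 where B: "B = (b1,b2,b3)" by (cases B) auto
  obtain c1 c2 c3 where C: "C = (c1,c2,c3)" by (cases C) auto
  define l1 where "l1 = (a1,b1,c1)"
  define l2 where "l2 = (a2,b2,c2)"
  define l3 where "l3 = (a3,b3,c3)"
  have mono: "mono3 e (colmat A B C v) = dot l1 v ^ fst e * dot l2 v ^ fst (snd e) * dot l3 v ^ snd (snd e)" for e v
    by (cases e; cases v) (auto simp: A B C l1_def l2_def l3_def mono3_def algebra_simps)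
  have "isform d (\<lambda>v. \<Sum>e\<in>box d. Cf e * mono3 e (colmat A B C v))"
  proof (rule isform_sum)
    fix e assume "e \<in> box d"
    show "isform d (\<lambda>v. Cf e * mono3 e (colmat A B C v))"
    proof (cases "Cf e = 0")
      case True then show ?thesis using isform_zero by simp
    next
      case False
      then have md: "fst e + fst (snd e) + snd (snd e) = d"
        using hC unfolding homog_form_def mdeg_def by (cases e) auto
      have "isform (fst e + fst (snd e) + snd (snd e)) (\<lambda>v. dot l1 v ^ fst e * dot l2 v ^ fst (snd e) * dot l3 v ^ snd (snd e))"
        by (intro isform_mult isform_power isform_dot)
      then show ?thesis unfolding mono md by (rule isform_smult)
    qed
  qed simp
  then show ?thesis unfolding phi eval_form_alt .
qed

lemma mono3_sc: "mono3 e (sc s v) = s ^ mdeg e * mono3 e v"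
  by (cases e; cases v) (auto simp: mono3_def mdeg_def power_add power_mult_distrib mult_ac)

lemma eval_sc:
  assumes "homog_form d C"
  shows "eval_form d C (sc s v) = s^d * eval_form d C v"
  unfolding eval_form_alt sum_distrib_left
proof (rule sum.cong[OF refl])
  fix e assume "e \<in> box d"
  show "C e * mono3 e (sc s v) = s ^ d * (C e * mono3 e v)"
  proof (cases "C e = 0")
    case False
    then have "mdeg e = d" using assms unfolding homog_form_def by blast
    then show ?thesis by (simp add: mono3_sc mult_ac)
  qed simp
qed

subsection \<open>Injectivity of evaluation\<close>

lemma poly1_zero:
  fixes a :: "nat \<Rightarrow> 'a::{field,finite}"
  assumes h: "\<And>x. (\<Sum>i\<le>n. a i * x^i) = 0" and n: "n < CARD('a)" and i: "i \<le> n"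
  shows "a i = 0"
proof -
  define p where "p = (\<Sum>i\<le>n. monom (a i) i)"
  have pe: "poly p x = (\<Sum>i\<le>n. a i * x^i)" for x
    by (simp add: p_def poly_sum poly_monom)
  have cp: "coeff p j = (if j \<le> n then a j else 0)" for j
    by (simp add: p_def coeff_sum coeff_monom)
  have dp: "degree p \<le> n"
    by (rule degree_le) (simp add: cp)
  have "p = 0"
    by (rule poly_eqI_degree[of UNIV]) (use h pe dp n in auto)
  then show ?thesis using cp[of i] i by simp
qed

lemma form_inj:
  fixes C :: "('a::{field,finite}) form3"
  assumes hC: "homog_form d C" and d: "d < CARD('a)" and z: "\<And>v. eval_form d C v = 0"
  shows "C e = 0"
proof (rule ccontr)
  assume ne: "C e \<noteq> 0"
  obtain i j k where e: "e = (i,j,k)" by (cases e) auto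
  from ne hC have "i+j+k = d" unfolding homog_form_def mdeg_def e by auto
  then have ijk: "i \<le> d" "j \<le> d" "k \<le> d" by auto
  have "\<forall>y z. (\<Sum>j\<le>d. (\<Sum>k\<le>d. C(i,j,k) * z^k) * y^j) = 0"
  proof (intro allI)
    fix y z
    show "(\<Sum>j\<le>d. (\<Sum>k\<le>d. C(i,j,k) * z^k) * y^j) = 0"
      by (rule poly1_zero[where a="\<lambda>i. (\<Sum>j\<le>d. (\<Sum>k\<le>d. C(i,j,k) * z^k) * y^j)" and n=d])
         (use z[of "(_,y,z)"] d ijk in \<open>auto simp: eval_form_nested\<close>)
  qed
  then have "\<forall>z. (\<Sum>k\<le>d. C(i,j,k) * z^k) = 0"
  proof (intro allI)
    fix z show "(\<Sum>k\<le>d. C(i,j,k) * z^k) = 0"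
      by (rule poly1_zero[where a="\<lambda>j. (\<Sum>k\<le>d. C(i,j,k) * z^k)" and n=d]) (use \<open>\<forall>y z. _\<close> d ijk in auto)
  qed
  then have "C(i,j,k) = 0"
    by (intro poly1_zero[where a="\<lambda>k. C(i,j,k)" and n=d]) (use d ijk in auto)
  then show False using ne e by simp
qed

lemma sum_zero_pow: "(\<Sum>j\<le>d. f j * (0::'a::comm_ring_1)^j) = f 0"
  by (induction d) auto

lemma form_zero_y0:
  fixes C :: "('a::{field,finite}) form3"
  assumes hC: "homog_form d C" and d: "d < CARD('a)" and z: "\<And>x z. eval_form d C (x,0,z) = 0"
  shows "C (i,0,k) = 0"
proof (rule ccontr)
  assume ne: "C (i,0,k) \<noteq> 0"
  from ne hC have "i+0+k = d" unfolding homog_form_def mdeg_def by fastforce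
  then have ik: "i \<le> d" "k \<le> d" by auto
  have "\<forall>z. (\<Sum>k\<le>d. C(i,0,k) * z^k) = 0"
  proof (intro allI)
    fix z
    show "(\<Sum>k\<le>d. C(i,0,k) * z^k) = 0"
      by (rule poly1_zero[where a="\<lambda>i. (\<Sum>k\<le>d. C(i,0,k) * z^k)" and n=d])
         (use z[of _ z] d ik in \<open>auto simp: eval_form_nested sum_zero_pow\<close>)
  qed
  then have "C(i,0,k) = 0"
    by (intro poly1_zero[where a="\<lambda>k. C(i,0,k)" and n=d]) (use d ik in auto)
  then show False using ne by simp
qed

subsection \<open>Multiplication by linear forms\<close>

definition lmul :: "'a::comm_ring_1 \<Rightarrow> 'a \<Rightarrow> 'a \<Rightarrow> 'a form3 \<Rightarrow> 'a form3" where
  "lmul a b c K e = (case e of (i,j,k) \<Rightarrow>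
     (if 1 \<le> i then a * K(i-1,j,k) else 0) + (if 1 \<le> j then b * K(i,j-1,k) else 0)
     + (if 1 \<le> k then c * K(i,j,k-1) else 0))"

lemma sum_if_eq:
  assumes "finite S"
  shows "(\<Sum>x\<in>S. (if x = e0 then a else 0) * g x) = (if e0 \<in> S then a * g e0 else (0::'a::comm_ring_1))"
proof -
  have "(\<Sum>x\<in>S. (if x = e0 then a else 0) * g x) = (\<Sum>x\<in>S. (if x = e0 then a * g e0 else 0))"
    by (rule sum.cong) auto
  also have "\<dots> = (if e0 \<in> S then a * g e0 else 0)" using assms by (simp add: sum.delta')
  finally show ?thesis .
qed

lemma lin_form_split: "lin_form a b c x = (0::'a::comm_ring_1) +  (if x = (1,0,0) then a else 0) + (if x = (0,1,0) then b else 0)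
   + (if x = (0,0,1) then c else 0)"
  by (auto simp: lin_form_def)

lemma mult_lin: "mult_form (lin_form a b c) K = lmul a b c K"
proof
  fix e :: "nat \<times> nat \<times> nat"
  obtain i j k where e: "e = (i,j,k)" by (cases e) auto
  define S where "S = {..i} \<times> {..j} \<times> {..k}"
  define g where "g = (\<lambda>p::nat\<times>nat\<times>nat. case p of (a',b',c') \<Rightarrow> K (i-a', j-b', k-c'))"
  have "mult_form (lin_form a b c) K e = (\<Sum>p\<in>S. lin_form a b c p * g p)"
    unfolding mult_form_def e S_def g_def by (auto intro!: sum.cong split: prod.splits)
  also have "\<dots> = (\<Sum>p\<in>S. (if p = (1,0,0) then a else 0) * g p) + (\<Sum>p\<in>S. (if p = (0,1,0) then b else 0) * g p)
     + (\<Sum>p\<in>S. (if p = (0,0,1) then c else 0) * g p)"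
    unfolding lin_form_split by (simp add: sum.distrib distrib_right)
  also have "\<dots> = lmul a b c K e"
    unfolding sum_if_eq[OF finite_cartesian_product[of _ "{..j} \<times> {..k}"]] S_def
    by (simp add: sum_if_eq lmul_def e g_def)
  finally show "mult_form (lin_form a b c) K e = lmul a b c K e" .
qed

lemma homog_lmul:
  assumes "homog_form n K"
  shows "homog_form (Suc n) (lmul a b c K)"
  unfolding homog_form_def
proof (intro allI impI)
  fix e assume ne: "lmul a b c K e \<noteq> 0"
  obtain i j k where e: "e = (i,j,k)" by (cases e) auto
  have "(1 \<le> i \<and> K(i-1,j,k) \<noteq> 0) \<or> (1 \<le> j \<and> K(i,j-1,k) \<noteq> 0) \<or> (1 \<le> k \<and> K(i,j,k-1) \<noteq> 0)"
  proof (rule ccontr)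
    assume h: "\<not> ((1 \<le> i \<and> K(i-1,j,k) \<noteq> 0) \<or> (1 \<le> j \<and> K(i,j-1,k) \<noteq> 0) \<or> (1 \<le> k \<and> K(i,j,k-1) \<noteq> 0))"
    have 1: "(if 1 \<le> i then a * K(i-1,j,k) else 0) = 0" using h by auto
    have 2: "(if 1 \<le> j then b * K(i,j-1,k) else 0) = 0" using h by auto
    have 3: "(if 1 \<le> k then c * K(i,j,k-1) else 0) = 0" using h by auto
    have "lmul a b c K e = 0" unfolding lmul_def e prod.case 1 2 3 by simp
    then show False using ne by simp
  qed
  then consider "1 \<le> i \<and> K(i-1,j,k) \<noteq> 0" | "1 \<le> j \<and> K(i,j-1,k) \<noteq> 0" | "1 \<le> k \<and> K(i,j,k-1) \<noteq> 0"
    by blast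
  then show "mdeg e = Suc n"
    using assms unfolding homog_form_def mdeg_def e by cases fastforce+
qed

lemma eval_form_mono:
  assumes "homog_form n K" "n \<le> m"
  shows "eval_form n K v = eval_form m K v"
  unfolding eval_form_alt
proof (rule sum.mono_neutral_left)
  show "box n \<subseteq> box m" using assms(2) by (auto simp: box_def)
  show "\<forall>e\<in>box m - box n. K e * mono3 e v = 0"
  proof
    fix e assume "e \<in> box m - box n"
    then have "K e = 0" using assms(1) unfolding homog_form_def mdeg_def box_def
      by (cases e) force
    then show "K e * mono3 e v = 0" by simp
  qed
qed simp

lemma shift1:
  fixes f :: "nat \<Rightarrow> 'a::comm_ring_1"
  assumes "f (Suc n) = 0"
  shows "(\<Sum>i\<le>Suc n. (if 1 \<le> i then f (i-1) else 0) * x^i) = x * (\<Sum>i\<le>Suc n. f i * x^i)"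
proof -
  have "(\<Sum>i\<le>Suc n. (if 1 \<le> i then f (i-1) else 0) * x^i) = (\<Sum>i\<le>n. f i * x^(Suc i))"
    by (subst sum.atMost_Suc_shift) simp
  also have "\<dots> = x * (\<Sum>i\<le>n. f i * x^i)" by (simp add: sum_distrib_left mult_ac)
  also have "\<dots> = x * (\<Sum>i\<le>Suc n. f i * x^i)" using assms by simp
  finally show ?thesis .
qed

lemma nested_split3:
  "(\<Sum>i\<le>m. (\<Sum>j\<le>m. (\<Sum>k\<le>m. (a * A i j k + b * B i j k + c * C i j k) * z^k) * y^j) * x^i) =
   a * (\<Sum>i\<le>m. (\<Sum>j\<le>m. (\<Sum>k\<le>m. A i j k * z^k) * y^j) * x^i)
 + b * (\<Sum>i\<le>m. (\<Sum>j\<le>m. (\<Sum>k\<le>m. B i j k * z^k) * y^j) * x^i)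
 + c * (\<Sum>i\<le>m. (\<Sum>j\<le>m. (\<Sum>k\<le>m. C i j k * z^k) * y^j) * x^i)"
  for a :: "'a::comm_ring_1"
  by (simp add: sum.distrib sum_distrib_left algebra_simps)

lemma eval_lmul:
  assumes hK: "homog_form n K"
  shows "eval_form (Suc n) (lmul a b c K) (x,y,z) = (a*x+b*y+c*z) * eval_form n K (x,y,z)"
proof -
  let ?m = "Suc n"
  have K0: "K (i,j,k) = 0" if "i = ?m \<or> j = ?m \<or> k = ?m" for i j k
    using hK that unfolding homog_form_def mdeg_def by force
  define T where "T i = (\<Sum>j\<le>?m. (\<Sum>k\<le>?m. K(i,j,k) * z^k) * y^j)" for i
  define U where "U i j = (\<Sum>k\<le>?m. K(i,j,k) * z^k)" for i j
  have m: "eval_form n K (x,y,z) = eval_form ?m K (x,y,z)" by (rule eval_form_mono[OF hK]) simp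
  have EK: "eval_form n K (x,y,z) = (\<Sum>i\<le>?m. T i * x^i)"
    by (rule trans[OF m]) (simp only: eval_form_nested T_def)
  have EK2: "eval_form n K (x,y,z) = (\<Sum>i\<le>?m. (\<Sum>j\<le>?m. U i j * y^j) * x^i)"
    by (rule trans[OF m]) (simp only: eval_form_nested U_def)
  have EK3: "eval_form n K (x,y,z) = (\<Sum>i\<le>?m. (\<Sum>j\<le>?m. (\<Sum>k\<le>?m. K(i,j,k) * z^k) * y^j) * x^i)"
    by (rule trans[OF m]) (simp only: eval_form_nested)
  have lsplit: "lmul a b c K (i,j,k) = a * (if 1 \<le> i then K(i-1,j,k) else 0) + b * (if 1 \<le> j then K(i,j-1,k) else 0)
     + c * (if 1 \<le> k then K(i,j,k-1) else 0)" for i j k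
    by (simp add: lmul_def)
  have "eval_form ?m (lmul a b c K) (x,y,z) =
     a * (\<Sum>i\<le>?m. (\<Sum>j\<le>?m. (\<Sum>k\<le>?m. (if 1 \<le> i then K(i-1,j,k) else 0) * z^k) * y^j) * x^i)
   + b * (\<Sum>i\<le>?m. (\<Sum>j\<le>?m. (\<Sum>k\<le>?m. (if 1 \<le> j then K(i,j-1,k) else 0) * z^k) * y^j) * x^i)
   + c * (\<Sum>i\<le>?m. (\<Sum>j\<le>?m. (\<Sum>k\<le>?m. (if 1 \<le> k then K(i,j,k-1) else 0) * z^k) * y^j) * x^i)"
    unfolding eval_form_nested lsplit by (rule nested_split3)
  also have "(\<Sum>i\<le>?m. (\<Sum>j\<le>?m. (\<Sum>k\<le>?m. (if 1 \<le> i then K(i-1,j,k) else 0) * z^k) * y^j) * x^i)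
      = (\<Sum>i\<le>?m. (if 1 \<le> i then T (i-1) else 0) * x^i)"
    by (intro sum.cong refl) (auto simp: T_def)
  also have "\<dots> = x * eval_form n K (x,y,z)"
    unfolding EK by (rule shift1) (simp add: T_def K0)
  also have "(\<Sum>i\<le>?m. (\<Sum>j\<le>?m. (\<Sum>k\<le>?m. (if 1 \<le> j then K(i,j-1,k) else 0) * z^k) * y^j) * x^i)
      = (\<Sum>i\<le>?m. (\<Sum>j\<le>?m. (if 1 \<le> j then U i (j-1) else 0) * y^j) * x^i)"
  proof -
    have aux: "(\<Sum>k\<le>?m. (if 1 \<le> j then K(i,j-1,k) else 0) * z^k) = (if 1 \<le> j then U i (j-1) else 0)" for i j
      by (simp add: U_def)
    show ?thesis by (simp only: aux)
  qed
  also have "\<dots> = (\<Sum>i\<le>?m. (y * (\<Sum>j\<le>?m. U i j * y^j)) * x^i)"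
    by (intro sum.cong refl arg_cong2[where f="(*)"] shift1) (simp add: U_def K0)
  also have "\<dots> = y * eval_form n K (x,y,z)"
    unfolding EK2 by (simp add: sum_distrib_left mult_ac del: sum.atMost_Suc)
  also have "(\<Sum>i\<le>?m. (\<Sum>j\<le>?m. (\<Sum>k\<le>?m. (if 1 \<le> k then K(i,j,k-1) else 0) * z^k) * y^j) * x^i)
      = (\<Sum>i\<le>?m. (\<Sum>j\<le>?m. (z * (\<Sum>k\<le>?m. K(i,j,k) * z^k)) * y^j) * x^i)"
    by (intro sum.cong refl arg_cong2[where f="(*)"] shift1) (simp add: K0)
  also have "\<dots> = z * eval_form n K (x,y,z)"
    unfolding EK3 by (simp add: sum_distrib_left mult_ac del: sum.atMost_Suc)
  finally show ?thesis by (simp add: algebra_simps)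
qed

lemma eval_diff: "eval_form d (\<lambda>e. F e - G e) v = eval_form d F v - eval_form d G v"
  unfolding eval_form_alt by (simp add: sum_subtractf algebra_simps)

lemma homog_diff:
  fixes F G :: "('a::comm_ring_1) form3"
  assumes "homog_form d F" "homog_form d G"
  shows "homog_form d (\<lambda>e. F e - G e)"
  unfolding homog_form_def
proof (intro allI impI)
  fix e assume "F e - G e \<noteq> 0"
  then have "F e \<noteq> 0 \<or> G e \<noteq> 0" by auto
  then show "mdeg e = d" using assms unfolding homog_form_def by blast
qed

lemma lincomp_from_fun:
  fixes F :: "('a::{field,finite}) form3"
  assumes hF: "homog_form (Suc n) F" and dq: "Suc n < CARD('a)" and l: "(a,b,c) \<noteq> (0,0,0)"
    and hK: "homog_form n K"
    and eq: "\<And>x y z. eval_form (Suc n) F (x,y,z) = (a*x+b*y+c*z) * eval_form n K (x,y,z)"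
  shows "has_lin_component (Suc n) F"
proof -
  define F' where "F' = lmul a b c K"
  have hF': "homog_form (Suc n) F'" unfolding F'_def by (rule homog_lmul[OF hK])
  have "(\<lambda>e. F e - F' e) e = 0" for e
  proof (rule form_inj[OF homog_diff[OF hF hF'] dq])
    fix v :: "'a \<times> 'a \<times> 'a"
    obtain x y z where v: "v = (x,y,z)" by (cases v) auto
    show "eval_form (Suc n) (\<lambda>e. F e - F' e) v = 0"
      unfolding eval_diff v F'_def eval_lmul[OF hK] eq by simp
  qed
  then have "F = F'" by auto
  then show ?thesis unfolding has_lin_component_def
    apply (rule_tac exI[of _ a], rule_tac exI[of _ b], rule_tac exI[of _ c], rule_tac exI[of _ K])
    using l hK by (simp add: F'_def mult_lin)
qed

lemma lincomp_isform:
  fixes F :: "('a::{field,finite}) form3"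
  assumes hF: "homog_form d F" and d1: "1 \<le> d" and dq: "d < CARD('a)" and l: "l \<noteq> (0,0,0)"
    and hk: "isform (d-1) \<kappa>" and eq: "\<And>v. eval_form d F v = dot l v * \<kappa> v"
  shows "has_lin_component d F"
proof -
  obtain n where n: "d = Suc n" using d1 by (cases d) auto
  obtain K where hK: "homog_form n K" and k: "\<kappa> = eval_form n K"
    using hk unfolding isform_def n by auto
  obtain a b c where lv: "l = (a,b,c)" by (cases l) auto
  show ?thesis unfolding n
    by (rule lincomp_from_fun[of n F a b c K]) (use hF dq l eq hK in \<open>auto simp: n lv k\<close>)
qed

lemma base_lincomp:
  fixes \<phi> :: "('a::{field,finite}) \<times> 'a \<times> 'a \<Rightarrow> 'a"
  assumes hp: "isform d \<phi>" and d1: "1 \<le> d" and dq: "d < CARD('a)" and z: "\<And>x z. \<phi> (x,0,z) = 0"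
  shows "\<exists>\<kappa>. isform (d-1) \<kappa> \<and> (\<forall>v. \<phi> v = dot (0,1,0) v * \<kappa> v)"
proof -
  obtain n where n: "d = Suc n" using d1 by (cases d) auto
  obtain C where hC: "homog_form d C" and p: "\<phi> = eval_form d C"
    using hp unfolding isform_def by auto
  have C0: "C (i,0,k) = 0" for i k
    by (rule form_zero_y0[OF hC dq]) (use z p in auto)
  define K where "K = (\<lambda>(i,j,k). C (i, Suc j, k))"
  have hK: "homog_form n K"
    unfolding homog_form_def
  proof (intro allI impI)
    fix e assume ne: "K e \<noteq> 0"
    obtain i j k where e: "e = (i,j,k)" by (cases e) auto
    have "C (i, Suc j, k) \<noteq> 0" using ne by (simp add: K_def e)
    then have "mdeg (i, Suc j, k) = Suc n" using hC n unfolding homog_form_def by blast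
    then show "mdeg e = n" by (simp add: mdeg_def e)
  qed
  have CK: "C = lmul 0 1 0 K"
  proof
    fix e :: "nat \<times> nat \<times> nat"
    obtain i j k where e: "e = (i,j,k)" by (cases e) auto
    show "C e = lmul 0 1 0 K e"
      by (cases j) (auto simp: e lmul_def K_def C0)
  qed
  have "\<forall>v. \<phi> v = dot (0,1,0) v * eval_form n K v"
  proof
    fix v :: "'a \<times> 'a \<times> 'a"
    obtain x y z where v: "v = (x,y,z)" by (cases v) auto
    show "\<phi> v = dot (0,1,0) v * eval_form n K v"
      unfolding p CK n v eval_lmul[OF hK] by simp
  qed
  moreover have "isform (d-1) (eval_form n K)" using hK unfolding isform_def n by auto
  ultimately show ?thesis by blast
qed

subsection \<open>Projective basics\<close>

lemma pow_card:
  fixes x :: "'a::{field,finite}"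
  shows "x ^ CARD('a) = x"
proof (cases "x = 0")
  case True then show ?thesis by (simp add: zero_power)
next
  case False
  define S where "S = (UNIV - {0::'a})"
  have fS: "finite S" by (simp add: S_def)
  have cS: "card S = CARD('a) - 1" by (simp add: S_def card_Diff_singleton)
  have bij: "bij_betw (\<lambda>y. x * y) S S"
    by (rule bij_betw_byWitness[where f'="\<lambda>y. inverse x * y"]) (use False in \<open>auto simp: S_def\<close>)
  have "(\<Prod>y\<in>S. x * y) = (\<Prod>y\<in>S. y)"
    using prod.reindex_bij_betw[OF bij, of "\<lambda>y. y"] by simp
  moreover have "(\<Prod>y\<in>S. x * y) = x ^ card S * (\<Prod>y\<in>S. y)"
    by (simp add: prod.distrib)
  moreover have "(\<Prod>y\<in>S. y) \<noteq> 0" using fS by (simp add: S_def)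
  ultimately have "x ^ card S = 1" by simp
  then have "x ^ (CARD('a) - 1) = 1" by (simp add: cS)
  moreover have "CARD('a) = Suc (CARD('a) - 1)"
    using card_gt_0_iff[of "UNIV::'a set"] by simp
  ultimately show ?thesis by (metis mult.right_neutral power_Suc)
qed

lemma on_line_dot: "on_line l p = (dot l p = 0)"
  by (cases l; cases p) (simp add: on_line_def)

definition nrm :: "('a::field) \<times> 'a \<times> 'a \<Rightarrow> 'a \<times> 'a \<times> 'a" where
  "nrm v = (case v of (x,y,z) \<Rightarrow> if x \<noteq> 0 then sc (inverse x) v else if y \<noteq> 0 then sc (inverse y) v else sc (inverse z) v)"

lemma P2_nz: "p \<in> P2 \<Longrightarrow> p \<noteq> (0,0,0)"
  by (auto simp: P2_def)

lemma nrm_P2: "v \<noteq> (0,0,0) \<Longrightarrow> nrm v \<in> P2"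
  by (cases v) (auto simp: nrm_def P2_def)

lemma nrm_id: "p \<in> P2 \<Longrightarrow> nrm p = p"
  by (cases p) (auto simp: nrm_def P2_def)

lemma nrm_sc_ex: "\<exists>s. s \<noteq> 0 \<and> nrm v = sc s v"
proof -
  obtain x y z where v: "v = (x,y,z)" by (cases v) auto
  show ?thesis
  proof (cases "x \<noteq> 0")
    case True then show ?thesis by (intro exI[of _ "inverse x"]) (simp add: nrm_def v)
  next
    case F1: False
    show ?thesis
    proof (cases "y \<noteq> 0")
      case True then show ?thesis using F1 by (intro exI[of _ "inverse y"]) (simp add: nrm_def v)
    next
      case False
      show ?thesis
      proof (cases "z = 0")
        case True then show ?thesis using F1 False by (intro exI[of _ 1]) (simp add: nrm_def v)
      next
        case False then show ?thesis using F1 \<open>\<not> y \<noteq> 0\<close>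
          by (intro exI[of _ "inverse z"]) (simp add: nrm_def v)
      qed
    qed
  qed
qed

lemma sc_sc: "sc s (sc t v) = sc (s*t) v"
  by (cases v) (simp add: mult.assoc)

lemma sc_one: "sc 1 v = v"
  by (cases v) simp

lemma P2_eq:
  assumes "p \<in> P2" "p' \<in> P2" "p = sc s p'"
  shows "p = p'"
  using assms by (cases p; cases p') (auto simp: P2_def)

lemma nrm_sc: "s \<noteq> 0 \<Longrightarrow> v \<noteq> (0,0,0) \<Longrightarrow> nrm (sc s v) = nrm v"
proof -
  assume s: "s \<noteq> 0" and v: "v \<noteq> (0,0,0)"
  obtain t where t: "t \<noteq> 0" "nrm (sc s v) = sc t (sc s v)" using nrm_sc_ex by blast
  obtain t' where t': "t' \<noteq> 0" "nrm v = sc t' v" using nrm_sc_ex by blast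
  have sv: "sc s v \<noteq> (0,0,0)" using s v by (cases v) auto
  have "nrm (sc s v) = sc (t*s/t') (nrm v)"
    using t t' s by (simp add: sc_sc)
  then show ?thesis
    by (intro P2_eq[OF nrm_P2[OF sv] nrm_P2[OF v]])
qed

lemma dot_sc: "dot l (sc s v) = s * dot l v"
  by (cases l; cases v) (simp add: algebra_simps)

lemma colmat_sc: "colmat A B C (sc s v) = sc s (colmat A B C v)"
  by (cases A; cases B; cases C; cases v) (simp add: algebra_simps)

lemma colmat_comp: "colmat R Q P (colmat A B C w) =
   colmat (colmat R Q P A) (colmat R Q P B) (colmat R Q P C) w"
  by (cases R; cases Q; cases P; cases A; cases B; cases C; cases w) (simp add: algebra_simps)

lemma dot_colmat: "dot L (colmat A B C w) = dot (dot L A, dot L B, dot L C) w"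
  by (cases L; cases A; cases B; cases C; cases w) (simp add: algebra_simps)

lemma colmat_units: "colmat (1,0,0) (0,1,0) (0,0,1) w = w"
  by (cases w) simp

lemma colmat_e1: "colmat A B C (1,0,0) = A" by (cases A; cases B; cases C) simp
lemma colmat_e2: "colmat A B C (0,1,0) = B" by (cases A; cases B; cases C) simp
lemma colmat_e3: "colmat A B C (0,0,1) = C" by (cases A; cases B; cases C) simp

lemma colmat_inverse:
  fixes R Q P :: "('a::{field,finite}) \<times> 'a \<times> 'a"
  assumes inj: "inj (colmat R Q P)"
  shows "\<exists>A B C. (\<forall>w. colmat R Q P (colmat A B C w) = w) \<and> (\<forall>u. colmat A B C (colmat R Q P u) = u)"
proof -
  let ?M = "colmat R Q P"
  have surj: "surj ?M" by (rule finite_UNIV_inj_surj[OF _ inj]) simp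
  define N where "N = inv ?M"
  have MN: "?M (N w) = w" for w unfolding N_def using surj by (simp add: surj_f_inv_f)
  define A where "A = N (1,0,0)"
  define B where "B = N (0,1,0)"
  define C where "C = N (0,0,1)"
  have 1: "?M (colmat A B C w) = w" for w
    unfolding colmat_comp A_def B_def C_def MN colmat_units ..
  have 2: "colmat A B C (?M u) = u" for u
    using 1[of "?M u"] inj by (meson injD)
  show ?thesis using 1 2 by blast
qed

subsection \<open>Coordinate change\<close>

lemma plane_vec:
  fixes l P :: "('a::field) \<times> 'a \<times> 'a"
  assumes l: "l \<in> P2" and P: "P \<noteq> (0,0,0)"
  shows "\<exists>Q. dot l Q = 0 \<and> (\<forall>s. Q \<noteq> sc s P)"
proof -
  have "\<exists>Q1 Q2. dot l Q1 = 0 \<and> dot l Q2 = 0 \<and> (\<forall>s t. sc s Q1 = sc t Q2 \<longrightarrow> s = 0 \<and> t = 0)"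
  proof -
    obtain a b c where lv: "l = (a,b,c)" by (cases l) auto
    consider "a = 1" | "a = 0" "b = 1" | "a = 0" "b = 0" "c = 1" using l by (auto simp: P2_def lv)
    then show ?thesis
    proof cases
      case 1 then show ?thesis
        by (intro exI[of _ "(-b,1,0)"] exI[of _ "(-c,0,1)"]) (auto simp: lv)
    next
      case 2 then show ?thesis
        by (intro exI[of _ "(1,0,0)"] exI[of _ "(0,-c,1)"]) (auto simp: lv)
    next
      case 3 then show ?thesis
        by (intro exI[of _ "(1,0,0)"] exI[of _ "(0,1,0)"]) (auto simp: lv)
    qed
  qed
  then obtain Q1 Q2 where Q: "dot l Q1 = 0" "dot l Q2 = 0" and ind: "\<And>s t. sc s Q1 = sc t Q2 \<Longrightarrow> s = 0 \<and> t = 0"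
    by blast
  show ?thesis
  proof (rule ccontr)
    assume "\<not> ?thesis"
    then obtain s t where s: "Q1 = sc s P" and t: "Q2 = sc t P" using Q by blast
    have "sc t Q1 = sc s Q2" by (simp add: s t sc_sc mult.commute)
    then have "t = 0 \<and> s = 0" using ind by blast
    then have "sc 1 Q1 = sc 0 Q2" using s by (cases P; cases Q2) simp
    then show False using ind[of 1 0] by simp
  qed
qed

lemma P2_unit_dot:
  fixes L :: "('a::field) \<times> 'a \<times> 'a"
  assumes "L \<noteq> (0,0,0)"
  shows "\<exists>u. dot L u \<noteq> 0"
proof -
  obtain a b c where L: "L = (a,b,c)" by (cases L) auto
  show ?thesis
  proof (cases "a = 0")
    case False then show ?thesis by (intro exI[of _ "(1,0,0)"]) (simp add: L)
  next
    case a: True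
    show ?thesis
    proof (cases "b = 0")
      case False then show ?thesis by (intro exI[of _ "(0,1,0)"]) (simp add: L)
    next
      case True then show ?thesis using assms a by (intro exI[of _ "(0,0,1)"]) (simp add: L)
    qed
  qed
qed

lemma colmat_inj:
  fixes R Q P l :: "('a::field) \<times> 'a \<times> 'a"
  assumes R: "dot l R \<noteq> 0" and Q: "dot l Q = 0" and Pl: "dot l P = 0"
    and P: "P \<noteq> (0,0,0)" and QP: "\<forall>s. Q \<noteq> sc s P"
  shows "inj (colmat R Q P)"
proof (rule injI)
  fix u v assume eq: "colmat R Q P u = colmat R Q P v"
  obtain x y z where u: "u = (x,y,z)" by (cases u) auto
  obtain x' y' z' where v: "v = (x',y',z')" by (cases v) auto
  obtain r1 r2 r3 where Rv: "R = (r1,r2,r3)" by (cases R) auto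
  obtain q1 q2 q3 where Qv: "Q = (q1,q2,q3)" by (cases Q) auto
  obtain p1 p2 p3 where Pv: "P = (p1,p2,p3)" by (cases P) auto
  define dx where "dx = x - x'"
  define dy where "dy = y - y'"
  define dz where "dz = z - z'"
  have k: "colmat R Q P (dx,dy,dz) = (0,0,0)"
    using eq by (simp add: u v Rv Qv Pv dx_def dy_def dz_def algebra_simps)
  have "dot l (colmat R Q P (dx,dy,dz)) = dx * dot l R"
    unfolding dot_colmat using Q Pl by (simp add: mult.commute)
  then have dx0: "dx = 0" using k R by (cases l) simp
  have dy0: "dy = 0"
  proof (rule ccontr)
    assume "dy \<noteq> 0"
    have c: "dy*q1 + dz*p1 = 0" "dy*q2 + dz*p2 = 0" "dy*q3 + dz*p3 = 0"
      using k dx0 by (simp_all add: Qv Pv Rv mult.commute)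
    have e: "q = (- dz / dy) * p" if "dy*q + dz*p = 0" for q p
    proof -
      have "dy * q = - (dz * p)" using that by (simp add: eq_neg_iff_add_eq_0)
      then show ?thesis using \<open>dy \<noteq> 0\<close> by (simp add: field_simps)
    qed
    have "Q = sc (- dz / dy) P"
      using e[OF c(1)] e[OF c(2)] e[OF c(3)] by (simp add: Qv Pv)
    then show False using QP by blast
  qed
  have "dz = 0"
  proof (rule ccontr)
    assume "dz \<noteq> 0"
    then have "P = (0,0,0)" using k dx0 dy0 by (simp add: Pv Qv Rv)
    then show False using P by simp
  qed
  then show "u = v" using dx0 dy0 by (simp add: u v dx_def dy_def dz_def)
qed



lemma dot_sc_left: "dot (sc t L) v = t * dot L v"
  by (cases L; cases v) (simp add: algebra_simps)

lemma transfer: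
  fixes F :: "('a::{field,finite}) form3" and l P :: "'a \<times> 'a \<times> 'a"
  assumes dd: "d = CARD('a) - 1" and q3: "CARD('a) \<ge> 3"
    and hF: "homog_form d F"
    and nlc: "\<not> has_lin_component d F"
    and l: "l \<in> lines2" and P: "P \<in> P2"
    and lP: "{p \<in> rat_points d F. on_line l p} = {P}"
    and allL: "\<forall>L\<in>lines2. {p \<in> rat_points d F. on_line L p} \<noteq> {}"
  shows "\<exists>Gc::'a form3. homog_form d Gc
     \<and> card {p\<in>P2. eval_form d Gc p = 0} = card (rat_points d F)
     \<and> (\<forall>z. eval_form d Gc (0,1,z) \<noteq> 0)
     \<and> eval_form d Gc (0,0,1) = 0
     \<and> (\<forall>L. L \<noteq> (0,0,0) \<longrightarrow> (\<exists>p\<in>P2. on_line L p \<and> eval_form d Gc p = 0))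
     \<and> (\<forall>c. \<not> (\<forall>z. eval_form d Gc (1,c,z) = 0))"
proof -
  have d1: "1 \<le> d" and dq: "d < CARD('a)" using q3 by (auto simp: dd)
  let ?eF = "eval_form d F"
  have lP2: "l \<in> P2" using l by (simp add: lines2_def)
  have l0: "l \<noteq> (0,0,0)" using P2_nz[OF lP2] .
  have P0: "P \<noteq> (0,0,0)" using P2_nz[OF P] .
  have PZ: "P \<in> rat_points d F" "on_line l P" using lP by auto
  have FP: "?eF P = 0" using PZ by (simp add: rat_points_def)
  have lPd: "dot l P = 0" using PZ on_line_dot by metis
  obtain Q where Q: "dot l Q = 0" "\<forall>s. Q \<noteq> sc s P" using plane_vec[OF lP2 P0] by blast
  obtain R where R: "dot l R \<noteq> 0" using P2_unit_dot[OF l0] by blast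
  let ?M = "colmat R Q P"
  have injM: "inj ?M" by (rule colmat_inj[OF R Q(1) lPd P0 Q(2)])
  obtain A B C where MN: "\<And>w. ?M (colmat A B C w) = w" and NM: "\<And>u. colmat A B C (?M u) = u"
    using colmat_inverse[OF injM] by blast
  let ?N = "colmat A B C"
  have M0: "?M u \<noteq> (0,0,0)" if "u \<noteq> (0,0,0)" for u
  proof
    assume "?M u = (0,0,0)"
    then have "?M u = ?M (0,0,0)" by (cases R; cases Q; cases P) simp
    then show False using injM that by (meson injD)
  qed
  define \<phi> where "\<phi> v = ?eF (?M v)" for v
  have isG: "isform d \<phi>"
    unfolding \<phi>_def by (rule isform_subst) (use hF in \<open>auto simp: isform_def\<close>)
  then obtain Gc where hG: "homog_form d Gc" and Gphi: "\<phi> = eval_form d Gc"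
    unfolding isform_def by auto
  define \<beta> where "\<beta> p = nrm (?M p)" for p
  have \<beta>P2: "\<beta> p \<in> P2" if "p \<in> P2" for p
    unfolding \<beta>_def by (rule nrm_P2[OF M0[OF P2_nz[OF that]]])
  have \<beta>sc: "\<exists>s. s \<noteq> 0 \<and> \<beta> p = sc s (?M p)" for p
    unfolding \<beta>_def by (rule nrm_sc_ex)
  have Fbeta: "?eF (\<beta> p) = 0 \<longleftrightarrow> \<phi> p = 0" for p
  proof -
    obtain s where s: "s \<noteq> 0" "\<beta> p = sc s (?M p)" using \<beta>sc by blast
    show ?thesis unfolding s(2) eval_sc[OF hF] \<phi>_def using s(1) by simp
  qed
  have dotbeta: "dot L' (\<beta> p) = 0 \<longleftrightarrow> dot L' (?M p) = 0" for L' p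
  proof -
    obtain s where s: "s \<noteq> 0" "\<beta> p = sc s (?M p)" using \<beta>sc by blast
    show ?thesis unfolding s(2) dot_sc using s(1) by simp
  qed
  have inj\<beta>: "inj_on \<beta> P2"
  proof (rule inj_onI)
    fix p p' assume p: "p \<in> P2" and p': "p' \<in> P2" and eq: "\<beta> p = \<beta> p'"
    obtain s where s: "s \<noteq> 0" "\<beta> p = sc s (?M p)" using \<beta>sc by blast
    obtain t where t: "t \<noteq> 0" "\<beta> p' = sc t (?M p')" using \<beta>sc by blast
    have "?M (sc s p) = ?M (sc t p')" using eq s t by (simp add: colmat_sc)
    then have "sc s p = sc t p'" using injM by (meson injD)
    then have "sc (inverse s) (sc s p) = sc (inverse s) (sc t p')" by simp
    then have "p = sc (inverse s * t) p'" using s(1) by (simp add: sc_sc sc_one)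
    then show "p = p'" using P2_eq p p' by blast
  qed
  have img\<beta>: "\<beta> ` P2 = P2"
    by (rule endo_inj_surj) (use inj\<beta> \<beta>P2 in auto)
  have H1: "card {p\<in>P2. eval_form d Gc p = 0} = card (rat_points d F)"
  proof -
    have "\<beta> ` {p\<in>P2. \<phi> p = 0} = rat_points d F"
    proof
      show "\<beta> ` {p\<in>P2. \<phi> p = 0} \<subseteq> rat_points d F"
        using \<beta>P2 Fbeta by (auto simp: rat_points_def)
    next
      show "rat_points d F \<subseteq> \<beta> ` {p\<in>P2. \<phi> p = 0}"
      proof
        fix p' assume "p' \<in> rat_points d F"
        then have p': "p' \<in> P2" "?eF p' = 0" by (auto simp: rat_points_def)
        then obtain p where "p \<in> P2" "p' = \<beta> p" using img\<beta> by blast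
        then show "p' \<in> \<beta> ` {p\<in>P2. \<phi> p = 0}" using p' Fbeta by auto
      qed
    qed
    moreover have "inj_on \<beta> {p\<in>P2. \<phi> p = 0}" using inj\<beta> by (rule inj_on_subset) auto
    ultimately show ?thesis using card_image Gphi by metis
  qed
  have H2': "eval_form d Gc (0,0,1) = 0"
    using FP by (simp add: Gphi[symmetric] \<phi>_def colmat_e3)
  have H2: "eval_form d Gc (0,1,z) \<noteq> 0" for z
  proof
    assume "eval_form d Gc (0,1,z) = 0"
    then have z: "\<phi> (0,1,z) = 0" by (simp add: Gphi)
    have pP2: "(0,1,z) \<in> P2" by (simp add: P2_def)
    have "dot l (?M (0,1,z)) = 0" unfolding dot_colmat using Q(1) lPd by simp
    then have "on_line l (\<beta> (0,1,z))" using dotbeta on_line_dot by metis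
    moreover have "\<beta> (0,1,z) \<in> rat_points d F"
      using z Fbeta \<beta>P2[OF pP2] by (simp add: rat_points_def)
    ultimately have "\<beta> (0,1,z) = P" using lP by blast
    moreover have "\<beta> (0,0,1) = P" unfolding \<beta>_def colmat_e3 by (rule nrm_id[OF P])
    ultimately have eqb: "\<beta> (0,1,z) = \<beta> (0,0,1)" by simp
    have P001: "(0,0,1::'a) \<in> P2" by (simp add: P2_def)
    from inj_onD[OF inj\<beta> eqb pP2 P001] show False by simp
  qed
  have H3: "\<exists>p\<in>P2. on_line L p \<and> eval_form d Gc p = 0" if L0: "L \<noteq> (0,0,0)" for L
  proof -
    define L' where "L' = (dot L A, dot L B, dot L C)"
    have dL: "dot L (?N w) = dot L' w" for w unfolding L'_def dot_colmat ..
    obtain u where u: "dot L u \<noteq> 0" using P2_unit_dot[OF L0] by blast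
    have "dot L' (?M u) \<noteq> 0" using u dL[of "?M u"] NM by simp
    then have L'0: "L' \<noteq> (0,0,0)" by (cases "?M u") auto
    define ell where "ell = nrm L'"
    have ell: "ell \<in> lines2" unfolding ell_def lines2_def by (rule nrm_P2[OF L'0])
    obtain t where t: "t \<noteq> 0" "ell = sc t L'" using nrm_sc_ex ell_def by blast
    obtain p' where p': "p' \<in> rat_points d F" "on_line ell p'" using allL ell by blast
    have p'P2: "p' \<in> P2" and Fp': "?eF p' = 0" using p' by (auto simp: rat_points_def)
    obtain p where p: "p \<in> P2" "p' = \<beta> p" using img\<beta> p'P2 by blast
    have "dot ell p' = 0" using p' on_line_dot by metis
    then have "dot L' p' = 0" using t by (simp add: dot_sc_left)
    then have "dot L' (?M p) = 0" using dotbeta p by metis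
    then have "dot L p = 0" using dL[of "?M p"] NM by simp
    then have "on_line L p" using on_line_dot by metis
    moreover have "eval_form d Gc p = 0" using Fp' p Fbeta Gphi by metis
    ultimately show ?thesis using p by blast
  qed
  have H4: "\<not> (\<forall>z. eval_form d Gc (1,c,z) = 0)" for c
  proof
    assume all0: "\<forall>z. eval_form d Gc (1,c,z) = 0"
    let ?sh = "colmat (1,c,0) (0,1,0) (0,0,1)"
    let ?shi = "colmat (1,-c,0) (0,1,0) (0,0,1)"
    have shsh: "?sh (?shi u) = u" for u by (cases u) simp
    define G2 where "G2 v = \<phi> (?sh v)" for v
    have isG2: "isform d G2" unfolding G2_def by (rule isform_subst[OF isG])
    have G2z: "G2 (x,0,z) = 0" for x z
    proof (cases "x = 0")
      case True
      have "(0,0,z) = sc z (0,0,1::'a)" by simp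
      then have "eval_form d Gc (0,0,z) = z^d * eval_form d Gc (0,0,1)" using eval_sc[OF hG] by metis
      then show ?thesis using True H2' by (simp add: G2_def Gphi)
    next
      case False
      have "(x, c*x, z) = sc x (1, c, z/x)" using False by simp
      then have "eval_form d Gc (x, c*x, z) = x^d * eval_form d Gc (1,c,z/x)" using eval_sc[OF hG] by metis
      then show ?thesis using all0 by (simp add: G2_def Gphi mult.commute)
    qed
    obtain \<kappa> where k: "isform (d-1) \<kappa>" and G2k: "\<forall>v. G2 v = dot (0,1,0) v * \<kappa> v"
      using base_lincomp[OF isG2 d1 dq] G2z by blast
    define A' where "A' = ?shi A"
    define B' where "B' = ?shi B"
    define C' where "C' = ?shi C"
    define L'' where "L'' = (dot (0,1,0) A', dot (0,1,0) B', dot (0,1,0) C')"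
    define \<kappa>' where "\<kappa>' w = \<kappa> (colmat A' B' C' w)" for w
    have k': "isform (d-1) \<kappa>'" unfolding \<kappa>'_def by (rule isform_subst[OF k])
    have shiN: "?shi (?N w) = colmat A' B' C' w" for w
      unfolding colmat_comp A'_def B'_def C'_def ..
    have Fw: "?eF w = dot L'' w * \<kappa>' w" for w
    proof -
      have "?eF w = \<phi> (?N w)" unfolding \<phi>_def MN ..
      also have "\<dots> = G2 (?shi (?N w))" unfolding G2_def shsh ..
      also have "\<dots> = dot (0,1,0) (colmat A' B' C' w) * \<kappa>' w" unfolding shiN \<kappa>'_def by (rule G2k[rule_format])
      also have "\<dots> = dot L'' w * \<kappa>' w" unfolding dot_colmat L''_def ..
      finally show ?thesis .
    qed
    have "?N Q = (0,1,0)" using NM[of "(0,1,0)"] by (simp add: colmat_e2)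
    then have cQ: "colmat A' B' C' Q = (0,1,0)" using shiN[of Q] by simp
    have "dot L'' Q = dot (0,1,0) (colmat A' B' C' Q)" unfolding L''_def dot_colmat ..
    then have "dot L'' Q = 1" using cQ by simp
    then have "L'' \<noteq> (0,0,0)" by (cases Q) auto
    then have "has_lin_component d F" by (rule lincomp_isform[OF hF d1 dq _ k' Fw])
    then show False using nlc by simp
  qed
  have all: "homog_form d Gc
     \<and> card {p\<in>P2. eval_form d Gc p = 0} = card (rat_points d F)
     \<and> (\<forall>z. eval_form d Gc (0,1,z) \<noteq> 0)
     \<and> eval_form d Gc (0,0,1) = 0
     \<and> (\<forall>L. L \<noteq> (0,0,0) \<longrightarrow> (\<exists>p\<in>P2. on_line L p \<and> eval_form d Gc p = 0))
     \<and> (\<forall>c. \<not> (\<forall>z. eval_form d Gc (1,c,z) = 0))"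
    using hG H1 H2 H2' H3 H4 by blast
  show ?thesis
    by (rule exI[of _ Gc]) (rule all)
qed



lemma coeff_mult_top:
  fixes p q :: "'a::comm_ring_1 poly"
  assumes "degree p \<le> n" "degree q \<le> m"
  shows "coeff (p * q) (n + m) = coeff p n * coeff q m"
proof -
  have "coeff (p * q) (n + m) = (\<Sum>i\<le>n+m. coeff p i * coeff q (n + m - i))"
    by (simp add: coeff_mult)
  also have "\<dots> = (\<Sum>i\<le>n+m. if i = n then coeff p n * coeff q m else 0)"
  proof (rule sum.cong[OF refl])
    fix i assume "i \<in> {..n+m}"
    show "coeff p i * coeff q (n + m - i) = (if i = n then coeff p n * coeff q m else 0)"
    proof (cases "i < n")
      case True
      then have "coeff q (n + m - i) = 0" using assms(2) by (intro coeff_eq_0) auto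
      then show ?thesis using True by simp
    next
      case False
      show ?thesis
      proof (cases "i = n")
        case False
        then have "coeff p i = 0" using assms(1) \<open>\<not> i < n\<close> by (intro coeff_eq_0) auto
        then show ?thesis using False by simp
      qed simp
    qed
  qed
  also have "\<dots> = coeff p n * coeff q m" by simp
  finally show ?thesis .
qed

lemma coeff_quad:
  fixes p :: "'a::comm_ring_1 poly"
  shows "coeff (p * [:a,b,c:]) (Suc (Suc n)) = a * coeff p (Suc (Suc n)) + b * coeff p (Suc n) + c * coeff p n"
  by (subst mult.commute) (simp add: algebra_simps)

lemma zero_pow_sum: "(\<Sum>i\<le>d. f i * (0::'a::comm_ring_1)^i) = f 0"
  by (rule sum_zero_pow)

lemma homogD: "homog_form d C \<Longrightarrow> C (i,j,k) \<noteq> 0 \<Longrightarrow> i + j + k = d"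
  unfolding homog_form_def mdeg_def by fastforce

lemma lin_rearr: "x - y + z = (0::'a::comm_ring_1) \<Longrightarrow> z = y - x"
  by (simp add: algebra_simps eq_neg_iff_add_eq_0)

lemma core:
  fixes Gc :: "('a::{field,finite}) form3"
  assumes dd: "d = CARD('a) - 1" and q7: "CARD('a) \<ge> 7" and hG: "homog_form d Gc"
    and H1: "card {p\<in>P2. eval_form d Gc p = 0} = (CARD('a) - 1)^2"
    and H2: "\<forall>z. eval_form d Gc (0,1,z) \<noteq> 0"
    and H2': "eval_form d Gc (0,0,1) = 0"
    and H3: "\<forall>L. L \<noteq> (0,0,0) \<longrightarrow> (\<exists>p\<in>P2. on_line L p \<and> eval_form d Gc p = 0)"
    and H4: "\<forall>c. \<not> (\<forall>z. eval_form d Gc (1,c,z) = 0)"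
  shows False
proof -
  define q where "q = CARD('a)"
  have q7': "q \<ge> 7" using q7 by (simp add: q_def)
  have dq: "d = q - 1" by (simp add: dd q_def)
  define g where "g c z = eval_form d Gc (1,c,z)" for c z
  define R where "R c = {z. g c z = 0}" for c
  define Aff where "Aff = {(y,z). g y z = 0}"
  have Zsplit: "{p\<in>P2. eval_form d Gc p = 0} = (\<lambda>(y,z). (1,y,z)) ` Aff \<union> {(0,0,1)}"
  proof (rule set_eqI)
    fix p :: "'a \<times> 'a \<times> 'a"
    obtain x y z where p: "p = (x,y,z)" by (cases p) auto
    show "p \<in> {p\<in>P2. eval_form d Gc p = 0} \<longleftrightarrow> p \<in> (\<lambda>(y,z). (1,y,z)) ` Aff \<union> {(0,0,1)}"
      using H2 H2' by (auto simp: p P2_def Aff_def g_def)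
  qed
  have cardAff: "card Aff + 1 = (q - 1)^2"
  proof -
    have "(0,0,1) \<notin> (\<lambda>(y,z). (1::'a,y,z)) ` Aff" by auto
    moreover have "inj_on (\<lambda>(y,z). (1::'a,y,z)) Aff" by (auto simp: inj_on_def)
    ultimately have "card ((\<lambda>(y,z). (1::'a,y,z)) ` Aff \<union> {(0,0,1)}) = card Aff + 1"
      by (simp add: card_image)
    then show ?thesis using H1 Zsplit by (simp add: q_def)
  qed
  have AffS: "Aff = Sigma UNIV R" by (auto simp: Aff_def R_def)
  have sumR: "(\<Sum>c\<in>UNIV. card (R c)) + 1 = (q - 1)^2"
    using cardAff unfolding AffS by (simp add: card_SigmaI)
  define b where "b k c = (\<Sum>j\<le>d. Gc(d-k-j, j, k) * c^j)" for k c
  have colsum: "(\<Sum>i\<le>d. Gc(i,j,k)) = Gc(d-k-j,j,k)" for j k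
  proof -
    have "(\<Sum>i\<le>d. Gc(i,j,k)) = (\<Sum>i\<le>d. if i = d-k-j then Gc(i,j,k) else 0)"
    proof (rule sum.cong[OF refl])
      fix i assume "i \<in> {..d}"
      show "Gc(i,j,k) = (if i = d-k-j then Gc(i,j,k) else 0)"
      proof (cases "Gc(i,j,k) = 0")
        case False
        then have "i + j + k = d" using hG unfolding homog_form_def mdeg_def by fastforce
        then show ?thesis by auto
      qed auto
    qed
    also have "\<dots> = Gc(d-k-j,j,k)" by (simp add: sum.delta')
    finally show ?thesis .
  qed
  have gexp: "g c z = (\<Sum>k\<le>d. b k c * z^k)" for c z
  proof -
    define F where "F i j k = Gc(i,j,k) * c^j * z^k" for i j k
    have "g c z = (\<Sum>i\<le>d. \<Sum>j\<le>d. \<Sum>k\<le>d. F i j k)"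
      by (simp add: g_def F_def eval_form_nested sum_distrib_right sum_distrib_left mult_ac)
    also have "\<dots> = (\<Sum>j\<le>d. \<Sum>i\<le>d. \<Sum>k\<le>d. F i j k)" by (rule sum.swap)
    also have "\<dots> = (\<Sum>j\<le>d. \<Sum>k\<le>d. \<Sum>i\<le>d. F i j k)" by (rule sum.cong[OF refl], rule sum.swap)
    also have "\<dots> = (\<Sum>k\<le>d. \<Sum>j\<le>d. \<Sum>i\<le>d. F i j k)" by (rule sum.swap)
    also have "\<dots> = (\<Sum>k\<le>d. \<Sum>j\<le>d. (\<Sum>i\<le>d. Gc(i,j,k)) * c^j * z^k)"
      by (simp add: F_def sum_distrib_right)
    also have "\<dots> = (\<Sum>k\<le>d. b k c * z^k)"
      by (simp add: colsum b_def sum_distrib_right)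
    finally show ?thesis .
  qed
  have bsmall: "b k c = (\<Sum>j\<le>d-k. Gc(d-k-j, j, k) * c^j)" if "k \<le> d" for k c
  proof -
    have "(\<Sum>j\<le>d-k. Gc(d-k-j, j, k) * c^j) = (\<Sum>j\<le>d. Gc(d-k-j, j, k) * c^j)"
    proof (rule sum.mono_neutral_left)
      show "\<forall>j\<in>{..d} - {..d-k}. Gc(d-k-j, j, k) * c^j = 0"
      proof
        fix j assume "j \<in> {..d} - {..d-k}"
        then have "j > d - k" by auto
        have "Gc(d-k-j, j, k) = 0"
        proof (rule ccontr)
          assume "Gc(d-k-j, j, k) \<noteq> 0"
          then have "(d-k-j) + j + k = d" using hG unfolding homog_form_def mdeg_def by fastforce
          then show False using \<open>j > d - k\<close> by simp
        qed
        then show "Gc(d-k-j, j, k) * c^j = 0" by simp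
      qed
    qed auto
    then show ?thesis by (simp add: b_def)
  qed
  define gp where "gp c = (\<Sum>k\<le>d. monom (b k c) k)" for c
  have poly_gp: "poly (gp c) z = g c z" for c z
    by (simp add: gp_def gexp poly_sum poly_monom)
  have coeff_gp: "coeff (gp c) k = (if k \<le> d then b k c else 0)" for c k
    by (simp add: gp_def coeff_sum coeff_monom)
  have G00d: "Gc(0,0,d) = 0"
  proof -
    have "eval_form d Gc (0,0,1) = (\<Sum>k\<le>d. Gc(0,0,k))"
      by (simp add: eval_form_nested zero_pow_sum)
    also have "\<dots> = (\<Sum>k\<le>d. if k = d then Gc(0,0,k) else 0)"
      by (rule sum.cong[OF refl]) (use homogD[OF hG] in fastforce)
    also have "\<dots> = Gc(0,0,d)" by simp
    finally show ?thesis using H2' by simp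
  qed
  have bd: "b d c = 0" for c
    using bsmall[of d c] G00d by simp
  have deg_gp: "degree (gp c) \<le> q - 2" for c
  proof (rule degree_le, intro allI impI)
    fix i assume "q - 2 < i"
    then have "i = d \<or> i > d" using dq q7' by auto
    then show "coeff (gp c) i = 0" using bd by (auto simp: coeff_gp)
  qed
  have gp0: "gp c \<noteq> 0" for c
  proof
    assume "gp c = 0"
    then have "\<forall>z. eval_form d Gc (1,c,z) = 0" using poly_gp by (simp add: g_def) (metis poly_0)
    then show False using H4 by blast
  qed
  have Rpoly: "R c = {z. poly (gp c) z = 0}" for c by (simp add: R_def poly_gp)
  have cardR_le: "card (R c) \<le> q - 2" for c
    using card_poly_roots_bound[OF gp0[of c]] deg_gp[of c] Rpoly[of c] by simp
  have cardR: "card (R c) = q - 2" for c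
  proof (rule ccontr)
    assume "card (R c) \<noteq> q - 2"
    then have lt: "card (R c) < q - 2" using cardR_le[of c] by simp
    have "(\<Sum>c\<in>UNIV. card (R c)) < (\<Sum>c\<in>(UNIV::'a set). q - 2)"
      by (rule sum_strict_mono_ex1) (use cardR_le lt in auto)
    also have "\<dots> = q * (q - 2)" by (simp add: q_def)
    finally have "(\<Sum>c\<in>UNIV. card (R c)) + 1 < q * (q - 2) + 1" by simp
    moreover have "(q - 1)^2 = q * (q - 2) + 1"
    proof -
      define m where "m = q - 2"
      have m: "q = Suc (Suc m)" using q7' by (simp add: m_def)
      show ?thesis by (simp add: m power2_eq_square algebra_simps)
    qed
    ultimately show False using sumR by simp
  qed
  define \<alpha> where "\<alpha> = Gc(1,0,q-2)"
  have dk1: "d - (q-2) = 1" using dq q7' by simp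
  have bq2: "b (q-2) c = \<alpha> + Gc(0,1,q-2) * c" for c
    using bsmall[of "q-2" c] dq q7' by (simp add: dk1 \<alpha>_def)
  have lead: "b (q-2) c \<noteq> 0" for c
  proof -
    have "q - 2 \<le> degree (gp c)" using card_poly_roots_bound[OF gp0[of c]] cardR[of c] Rpoly[of c] by simp
    then have dg: "degree (gp c) = q - 2" using deg_gp[of c] by simp
    have "coeff (gp c) (degree (gp c)) \<noteq> 0" using gp0[of c] by simp
    then show ?thesis unfolding dg coeff_gp using dq by (simp split: if_splits)
  qed
  have w01: "Gc(0,1,q-2) = 0"
  proof (rule ccontr)
    assume ne: "Gc(0,1,q-2) \<noteq> 0"
    have "b (q-2) (- \<alpha> / Gc(0,1,q-2)) = 0" using ne by (simp add: bq2)
    then show False using lead by blast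
  qed
  have bq2': "b (q-2) c = \<alpha>" for c using bq2 w01 by simp
  have \<alpha>0: "\<alpha> \<noteq> 0" using lead[of 0] bq2' by simp
  have quad: "degree [:a0, a1, a2:] \<le> 2" for a0 a1 a2 :: 'a
    by (rule degree_le) (auto simp: coeff_pCons split: nat.splits)
  have fact: "\<exists>u v. (\<forall>z. g c z \<noteq> 0 \<longleftrightarrow> z^2 - u*z + v = 0)
      \<and> (\<forall>n. n + 2 < q \<longrightarrow> v * b (n+2) c - u * b (n+1) c + b n c = 0)" for c
  proof -
    have "card (UNIV - R c) = 2"
      using cardR[of c] q7' by (simp add: card_Diff_subset q_def)
    then obtain s1 s2 where N: "UNIV - R c = {s1, s2}" and s12: "s1 \<noteq> s2"
      by (auto simp: card_2_iff)
    define u where "u = s1 + s2"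
    define v where "v = s1 * s2"
    have nonroot: "g c z \<noteq> 0 \<longleftrightarrow> z^2 - u*z + v = 0" for z
    proof -
      have "z^2 - u*z + v = (z - s1) * (z - s2)" by (simp add: u_def v_def power2_eq_square algebra_simps)
      moreover have "g c z \<noteq> 0 \<longleftrightarrow> z = s1 \<or> z = s2" using N by (auto simp: R_def)
      ultimately show ?thesis by simp
    qed
    define LHS where "LHS = gp c * [:v, -u, 1:]"
    define RHS where "RHS = smult \<alpha> (monom 1 q - [:0, 1:])"
    have q2: "q = Suc (Suc (q-2))" using q7' by simp
    have "LHS = RHS"
    proof (rule poly_eqI_degree_lead_coeff[where n=q and A=UNIV])
      have "coeff LHS q = v * coeff (gp c) q - u * coeff (gp c) (Suc (q-2)) + coeff (gp c) (q-2)"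
        unfolding LHS_def by (subst q2, subst coeff_quad) (simp add: q2[symmetric])
      also have "\<dots> = \<alpha>"
      proof -
        have sq: "Suc (q-2) = d" using dq q7' by simp
        have a1: "\<not> q \<le> q - Suc 0" "q - 2 \<le> q - Suc 0" using q7' by auto
        show ?thesis using dq q7' bd[of c] bq2'[of c] a1 by (simp add: coeff_gp sq)
      qed
      moreover have "coeff [:0,1::'a:] q = 0" by (subst q2) simp
      ultimately show "coeff LHS q = coeff RHS q"
        unfolding RHS_def using q7' by (simp add: coeff_monom)
      show "q \<le> card (UNIV :: 'a set)" by (simp add: q_def)
      show "degree LHS \<le> q"
        unfolding LHS_def using degree_mult_le[of "gp c" "[:v, -u, 1:]"] deg_gp[of c] quad[of v "-u" 1] q7'
        by simp
      show "degree RHS \<le> q"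
        unfolding RHS_def using q7'
        by (intro order.trans[OF degree_smult_le] degree_diff_le order.trans[OF degree_monom_le])
           (auto intro: order.trans[OF degree_pCons_le])
      fix z :: 'a
      have "poly LHS z = g c z * (z^2 - u*z + v)"
        by (simp add: LHS_def poly_gp power2_eq_square algebra_simps)
      also have "\<dots> = 0" using nonroot[of z] by (cases "g c z = 0") auto
      also have "\<dots> = poly RHS z" by (simp add: RHS_def poly_monom q_def pow_card)
      finally show "poly LHS z = poly RHS z" .
    qed
    have rel: "v * b (n+2) c - u * b (n+1) c + b n c = 0" if n: "n + 2 < q" for n
    proof -
      have "coeff LHS (Suc (Suc n)) = v * b (n+2) c - u * b (n+1) c + b n c"
        unfolding LHS_def coeff_quad using n dq by (simp add: coeff_gp)
      moreover have "coeff RHS (Suc (Suc n)) = 0" using n by (simp add: RHS_def coeff_monom)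
      ultimately show ?thesis using \<open>LHS = RHS\<close> by simp
    qed
    show ?thesis using nonroot rel by blast
  qed
  obtain U V where UV: "\<And>c z. g c z \<noteq> 0 \<longleftrightarrow> z^2 - U c * z + V c = 0"
    and rel: "\<And>c n. n + 2 < q \<Longrightarrow> V c * b (n+2) c - U c * b (n+1) c + b n c = 0"
    using fact by metis
  have e: "q - 3 + 2 = d" "q - 3 + 1 = q - 2" "q - 4 + 2 = q - 2" "q - 4 + 1 = q - 3"
    "q - 5 + 2 = q - 3" "q - 5 + 1 = q - 4" "q - 6 + 2 = q - 4" "q - 6 + 1 = q - 5"
    "q - 3 + 2 < q" "q - 4 + 2 < q" "q - 5 + 2 < q" "q - 6 + 2 < q"
    using q7' dq by auto
  have f1: "b (q-3) c = U c * \<alpha>" for c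
    using lin_rearr[OF rel[of "q-3" c, OF e(9)]] e(1,2) bd[of c] bq2'[of c] by simp
  have f2: "b (q-4) c = U c * b (q-3) c - V c * \<alpha>" for c
    using lin_rearr[OF rel[of "q-4" c, OF e(10)]] e(3,4) bq2'[of c] by simp
  have f3: "b (q-5) c = U c * b (q-4) c - V c * b (q-3) c" for c
    using lin_rearr[OF rel[of "q-5" c, OF e(11)]] e(5,6) by simp
  have f4: "b (q-6) c = U c * b (q-5) c - V c * b (q-4) c" for c
    using lin_rearr[OF rel[of "q-6" c, OF e(12)]] e(7,8) by simp
  have E3: "b (q-3) c ^ 3 - 2 * \<alpha> * b (q-3) c * b (q-4) c + \<alpha>^2 * b (q-5) c = 0" for c
    unfolding f3 f2 f1 by (simp add: algebra_simps power2_eq_square power3_eq_cube)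
  have E4: "b (q-3) c ^ 2 * b (q-4) c - \<alpha> * b (q-4) c ^ 2 - \<alpha> * b (q-3) c * b (q-5) c + \<alpha>^2 * b (q-6) c = 0" for c
    unfolding f4 f3 f2 f1 by (simp add: algebra_simps power2_eq_square power3_eq_cube)
  define Bp where "Bp m = (\<Sum>j\<le>m+1. monom (Gc(m+1-j, j, q-2-m)) j)" for m
  have coeff_Bp: "coeff (Bp m) j = (if j \<le> m+1 then Gc(m+1-j, j, q-2-m) else 0)" for m j
    by (simp add: Bp_def coeff_sum coeff_monom)
  have deg_Bp: "degree (Bp m) \<le> m + 1" for m
    by (rule degree_le) (simp add: coeff_Bp)
  have poly_Bp: "poly (Bp m) c = b (q-2-m) c" if "m \<le> 4" for m c
  proof -
    have k: "q - 2 - m \<le> d" and dk: "d - (q - 2 - m) = m + 1" using that q7' dq by auto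
    have "b (q-2-m) c = (\<Sum>j\<le>m+1. Gc(m+1-j, j, q-2-m) * c^j)"
      using bsmall[OF k, of c] unfolding dk by simp
    then show ?thesis by (simp add: Bp_def poly_sum poly_monom)
  qed
  have qm: "q - 2 - 1 = q - 3" "q - 2 - 2 = q - 4" "q - 2 - 3 = q - 5" "q - 2 - 4 = q - 6" by auto
  define B1 where "B1 = Bp 1"
  define B2 where "B2 = Bp 2"
  define B3 where "B3 = Bp 3"
  define B4 where "B4 = Bp 4"
  have pB1: "poly B1 c = b (q-3) c" for c using poly_Bp[of 1 c] qm unfolding B1_def by simp
  have pB2: "poly B2 c = b (q-4) c" for c using poly_Bp[of 2 c] qm unfolding B2_def by simp
  have pB3: "poly B3 c = b (q-5) c" for c using poly_Bp[of 3 c] qm unfolding B3_def by simp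
  have pB4: "poly B4 c = b (q-6) c" for c using poly_Bp[of 4 c] qm unfolding B4_def by simp
  have dB1: "degree B1 \<le> 2" using deg_Bp[of 1] unfolding B1_def by simp
  have dB2: "degree B2 \<le> 3" using deg_Bp[of 2] unfolding B2_def by simp
  have dB3: "degree B3 \<le> 4" using deg_Bp[of 3] unfolding B3_def by simp
  have dB4: "degree B4 \<le> 5" using deg_Bp[of 4] unfolding B4_def by simp
  have t21: "(2::nat) + 1 = 3" by simp
  have cB1: "coeff B1 j = (if j \<le> 2 then Gc(2-j, j, q-3) else 0)" for j
    by (simp only: B1_def coeff_Bp qm one_add_one)
  have cB2: "coeff B2 j = (if j \<le> 3 then Gc(3-j, j, q-4) else 0)" for j
    using coeff_Bp[of 2 j] qm unfolding B2_def by (simp only: B1_def coeff_Bp qm t21)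
  have card_big: "6 < card (UNIV :: 'a set)" using q7' by (simp add: q_def)
  define P3 where "P3 = B1 ^ 3 - smult (2 * \<alpha>) (B1 * B2) + smult (\<alpha>^2) (B3)"
  have "P3 = 0"
  proof (rule poly_eqI_degree[of UNIV])
    fix c :: 'a
    show "poly P3 c = poly 0 c" using E3[of c] by (simp add: P3_def pB1 pB2 pB3 mult.assoc)
  next
    have "degree (B1 ^ 3) \<le> 6"
      using order.trans[OF degree_power_le, of "B1" 3] dB1 by simp
    moreover have "degree (B1 * B2) \<le> 6"
      using order.trans[OF degree_mult_le, of "B1" "B2"] dB1 dB2 by simp
    moreover have "degree (B3) \<le> 6" using dB3 by simp
    ultimately have "degree P3 \<le> 6" unfolding P3_def
      by (intro degree_add_le degree_diff_le order.trans[OF degree_smult_le])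
    then show "degree P3 < card (UNIV :: 'a set)" using card_big by simp
  qed (use card_big in simp)
  have c12: "coeff (B1) 2 = 0"
  proof -
    have d11: "degree (B1 * B1) \<le> 4"
      using order.trans[OF degree_mult_le, of "B1" "B1"] dB1 by simp
    have "coeff (B1 ^ 3) 6 = coeff (B1) 2 ^ 3"
    proof -
      have "coeff (B1 ^ 3) 6 = coeff (B1 * (B1 * B1)) (2 + 4)" by (simp add: power3_eq_cube mult.assoc)
      also have "\<dots> = coeff (B1) 2 * coeff (B1 * B1) 4"
        by (rule coeff_mult_top) (use dB1 d11 in auto)
      also have "coeff (B1 * B1) 4 = coeff (B1) 2 * coeff (B1) 2"
        using coeff_mult_top[of "B1" 2 "B1" 2] dB1 by simp
      finally show ?thesis by (simp add: power3_eq_cube)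
    qed
    moreover have "coeff (B1 * B2) 6 = 0"
      using degree_mult_le[of B1 B2] dB1 dB2
      by (intro coeff_eq_0) linarith
    moreover have "coeff (B3) 6 = 0" using dB3 by (intro coeff_eq_0) simp
    moreover have "coeff P3 6 = 0" using \<open>P3 = 0\<close> by simp
    ultimately have "coeff (B1) 2 ^ 3 = 0" by (simp add: P3_def)
    then show ?thesis by simp
  qed
  have deg_B1: "degree (B1) \<le> 1"
  proof (rule degree_le, intro allI impI)
    fix j :: nat assume "1 < j"
    then show "coeff (B1) j = 0" using c12 by (cases "j = 2") (auto simp: cB1)
  qed
  define P4 where "P4 = B1 ^ 2 * B2 - smult \<alpha> (B2 ^ 2) - smult \<alpha> (B1 * B3) + smult (\<alpha>^2) (B4)"
  have dB12: "degree (B1 ^ 2 * B2) \<le> 5"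
  proof -
    have "degree (B1 ^ 2) \<le> 2" using degree_power_le[of B1 2] deg_B1 by linarith
    then show ?thesis using degree_mult_le[of "B1 ^ 2" B2] dB2 by linarith
  qed
  have dB13: "degree (B1 * B3) \<le> 5"
    using degree_mult_le[of B1 B3] deg_B1 dB3 by linarith
  have dB22: "degree (B2 ^ 2) \<le> 6"
    using degree_power_le[of B2 2] dB2 by linarith
  have "P4 = 0"
  proof (rule poly_eqI_degree[of UNIV])
    fix c :: 'a
    show "poly P4 c = poly 0 c" using E4[of c] by (simp add: P4_def pB1 pB2 pB3 pB4 mult.assoc)
  next
    have "degree (B4) \<le> 6" using dB4 by simp
    then have "degree P4 \<le> 6" unfolding P4_def using dB12 dB13 dB22
      by (intro degree_add_le degree_diff_le order.trans[OF degree_smult_le]) auto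
    then show "degree P4 < card (UNIV :: 'a set)" using card_big by simp
  qed (use card_big in simp)
  have c23: "coeff (B2) 3 = 0"
  proof -
    have "coeff (B2 ^ 2) 6 = coeff (B2) 3 ^ 2"
      using coeff_mult_top[of "B2" 3 "B2" 3] dB2 by (simp add: power2_eq_square)
    moreover have "coeff (B1 ^ 2 * B2) 6 = 0" using dB12 by (intro coeff_eq_0) simp
    moreover have "coeff (B1 * B3) 6 = 0" using dB13 by (intro coeff_eq_0) simp
    moreover have "coeff (B4) 6 = 0" using dB4 by (intro coeff_eq_0) simp
    moreover have "coeff P4 6 = 0" using \<open>P4 = 0\<close> by simp
    ultimately have "\<alpha> * coeff (B2) 3 ^ 2 = 0" by (simp add: P4_def)
    then show ?thesis using \<alpha>0 by simp
  qed
  have B1e: "B1 = [:coeff B1 0, coeff B1 1:]"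
  proof (rule poly_eqI)
    fix n show "coeff B1 n = coeff [:coeff B1 0, coeff B1 1:] n"
      by (cases n; cases "n - 1") (use deg_B1 in \<open>auto intro!: coeff_eq_0\<close>)
  qed
  have deg_B2: "degree B2 \<le> 2"
  proof (rule degree_le, intro allI impI)
    fix j :: nat assume "2 < j"
    then show "coeff B2 j = 0" using c23 by (cases "j = 3") (auto simp: cB2)
  qed
  have B2e: "B2 = [:coeff B2 0, coeff B2 1, coeff B2 2:]"
  proof (rule poly_eqI)
    fix n show "coeff B2 n = coeff [:coeff B2 0, coeff B2 1, coeff B2 2:] n"
      by (cases n; cases "n - 1"; cases "n - 2") (use deg_B2 in \<open>auto intro!: coeff_eq_0 simp: numeral_2_eq_2\<close>)
  qed
  define a0 where "a0 = coeff B1 0"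
  define a1 where "a1 = coeff B1 1"
  define c0 where "c0 = coeff B2 0"
  define c1 where "c1 = coeff B2 1"
  define c2 where "c2 = coeff B2 2"
  have b3e: "b (q-3) c = a0 + a1 * c" for c
    using pB1[of c] by (subst (asm) B1e) (simp add: a0_def a1_def mult.commute)
  have b4e: "b (q-4) c = c0 + c1 * c + c2 * c^2" for c
    using pB2[of c] by (subst (asm) B2e) (simp add: c0_def c1_def c2_def algebra_simps power2_eq_square)
  define u0 where "u0 = a0 / \<alpha>"
  define u1 where "u1 = a1 / \<alpha>"
  define v0 where "v0 = (u0 * a0 - c0) / \<alpha>"
  define v1 where "v1 = (u0 * a1 + u1 * a0 - c1) / \<alpha>"
  define v2 where "v2 = (u1 * a1 - c2) / \<alpha>"
  have Ulin: "U c = u0 + u1 * c" for c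
  proof -
    have "U c * \<alpha> = a0 + a1 * c" using f1[of c] b3e[of c] by simp
    then show ?thesis using \<alpha>0 by (simp add: u0_def u1_def field_simps)
  qed
  have Vq: "V c = v0 + v1 * c + v2 * c^2" for c
  proof -
    have "V c * \<alpha> = U c * (a0 + a1 * c) - (c0 + c1 * c + c2 * c^2)"
      using f2[of c] b3e[of c] b4e[of c] by (simp add: algebra_simps)
    then have hV: "V c * \<alpha> = (u0 + u1 * c) * (a0 + a1 * c) - (c0 + c1 * c + c2 * c^2)" by (simp add: Ulin)
    have "(v0 + v1*c + v2*c^2) * \<alpha> = v0*\<alpha> + (v1*\<alpha>)*c + (v2*\<alpha>)*c^2" by (simp add: algebra_simps)
    also have "\<dots> = (u0*a0 - c0) + (u0*a1+u1*a0-c1)*c + (u1*a1-c2)*c^2"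
      using \<alpha>0 by (simp add: v0_def v1_def v2_def)
    also have "\<dots> = V c * \<alpha>" using hV by (simp add: algebra_simps power2_eq_square)
    finally show ?thesis using \<alpha>0 by simp
  qed
  define S where "S c z = z^2 - U c * z + V c" for c z
  have gS: "g c z \<noteq> 0 \<longleftrightarrow> S c z = 0" for c z using UV by (simp add: S_def)
  have cardS: "card {z. S c z = 0} = 2" for c
  proof -
    have "{z. S c z = 0} = UNIV - R c" using gS by (auto simp: R_def)
    then show ?thesis using cardR[of c] q7' by (simp add: card_Diff_subset q_def)
  qed
  obtain z0 where z0: "S 0 z0 = 0"
  proof -
    have "{z. S 0 z = 0} \<noteq> {}" using cardS[of 0] by (metis card.empty zero_neq_numeral)
    then show ?thesis using that by blast
  qed
  define T where "T = Sigma (UNIV - {0}) (\<lambda>y. {z. S y z = 0})"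
  have cardT: "card T = (q - 1) * 2"
  proof -
    have "card T = (\<Sum>y\<in>UNIV - {0}. card {z. S y z = 0})" unfolding T_def by (simp add: card_SigmaI)
    also have "\<dots> = (\<Sum>y\<in>UNIV - {0::'a}. 2)" using cardS by simp
    also have "\<dots> = (q - 1) * 2" by (simp add: card_Diff_singleton q_def)
    finally show ?thesis .
  qed
  define \<sigma> where "\<sigma> p = (snd p - z0) / fst p" for p :: "'a \<times> 'a"
  have ninj: "\<not> inj_on \<sigma> T"
  proof
    assume "inj_on \<sigma> T"
    then have "card T \<le> card (UNIV :: 'a set)" by (rule card_inj_on_le) auto
    then show False using cardT q7' by (simp add: q_def)
  qed
  then obtain x1 x2 where x: "x1 \<in> T" "x2 \<in> T" "x1 \<noteq> x2" "\<sigma> x1 = \<sigma> x2"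
    unfolding inj_on_def by blast
  obtain y1 z1 where x1: "x1 = (y1, z1)" by (cases x1) auto
  obtain y2 z2 where x2: "x2 = (y2, z2)" by (cases x2) auto
  define m where "m = \<sigma> x1"
  have y1: "y1 \<noteq> 0" "S y1 z1 = 0" using x(1) by (auto simp: T_def x1)
  have y2: "y2 \<noteq> 0" "S y2 z2 = 0" using x(2) by (auto simp: T_def x2)
  have z1: "z1 = z0 + m * y1" using y1(1) by (simp add: m_def \<sigma>_def x1 field_simps)
  have z2: "z2 = z0 + m * y2" using y2(1) x(4) by (simp add: m_def \<sigma>_def x1 x2 field_simps)
  have y12: "y1 \<noteq> y2" using x(3) z1 z2 by (auto simp: x1 x2)
  define K1 where "K1 = 2*m*z0 - u0*m - u1*z0 + v1"
  define K2 where "K2 = m^2 - u1*m + v2"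
  have Sline: "S y (z0 + m*y) = S 0 z0 + K1 * y + K2 * y^2" for y
    by (simp add: S_def Ulin Vq K1_def K2_def algebra_simps power2_eq_square)
  have k1: "K1 + K2 * y = 0" if "y \<noteq> 0" "S y (z0 + m*y) = 0" for y
  proof -
    have "y * (K1 + K2 * y) = 0" using that(2) Sline[of y] z0 by (simp add: algebra_simps power2_eq_square)
    then show ?thesis using that(1) by simp
  qed
  have "K1 + K2 * y1 = 0" using k1 y1 z1 by simp
  moreover have "K1 + K2 * y2 = 0" using k1 y2 z2 by simp
  moreover have "K2 * (y1 - y2) = (K1 + K2*y1) - (K1 + K2*y2)" by (simp add: algebra_simps)
  ultimately have "K2 * (y1 - y2) = 0" by simp
  then have K2: "K2 = 0" using y12 by simp
  then have K1: "K1 = 0" using \<open>K1 + K2 * y1 = 0\<close> by simp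
  have lineS: "g y (z0 + m*y) \<noteq> 0" for y using gS Sline[of y] z0 K1 K2 by simp
  \<comment> \<open>The line z = z0 x + m y has no point\<close>
  obtain p where p: "p \<in> P2" "on_line (z0, m, -1) p" "eval_form d Gc p = 0"
  proof -
    have "(z0, m, -1::'a) \<noteq> (0,0,0)" by simp
    then show ?thesis using H3 that by blast
  qed
  obtain x y z where pv: "p = (x,y,z)" by (cases p) auto
  have ol: "z0 * x + m * y - z = 0" using p(2) by (simp add: on_line_def pv)
  consider "x = 1" | "x = 0" "y = 1" | "x = 0" "y = 0" "z = 1" using p(1) by (auto simp: P2_def pv)
  then show False
  proof cases
    case 1
    then have "z = z0 + m * y" using ol by (simp add: algebra_simps)
    then show False using lineS[of y] p(3) 1 by (simp add: g_def pv)
  next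
    case 2 then show False using H2 p(3) by (simp add: pv)
  next
    case 3 then show False using ol by simp
  qed
qed


theorem proposition3p15:
  fixes F :: "('a::{field,finite}) form3"
  assumes "CARD('a) \<ge> 7"
    and "homog_form (CARD('a) - 1) F" and "F \<noteq> (\<lambda>_. 0)"
    and "\<not> has_lin_component (CARD('a) - 1) F"
    and "Nq (CARD('a) - 1) F = (CARD('a) - 1)^2"
    and "k0 (CARD('a) - 1) F \<noteq> 0"
  shows "k0 (CARD('a) - 1) F \<ge> 2"
proof (rule ccontr)
  assume nk: "\<not> k0 (CARD('a) - 1) F \<ge> 2"
  define d where "d = CARD('a) - 1"
  have q7: "CARD('a) \<ge> 7" using assms(1) .
  have q3: "CARD('a) \<ge> 3" using q7 by simp
  have hF: "homog_form d F" using assms(2) by (simp add: d_def)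
  have nlc: "\<not> has_lin_component d F" using assms(4) by (simp add: d_def)
  have NqF: "card (rat_points d F) = (CARD('a) - 1)^2" using assms(5) by (simp add: d_def Nq_def)
  define cnt where "cnt l = card {p \<in> rat_points d F. on_line l p}" for l
  define S where "S = {i \<in> {0..CARD('a) + 1}. a_count d F i \<noteq> 0}"
  have k0S: "k0 d F = Min S" by (simp add: k0_def S_def)
  have finS: "finite S" by (simp add: S_def)
  have acnt: "a_count d F i = card {l \<in> lines2. cnt l = i}" for i by (simp add: a_count_def cnt_def)
  have acnt_ne: "a_count d F i \<noteq> 0 \<longleftrightarrow> (\<exists>l\<in>lines2. cnt l = i)" for i
  proof -
    have "finite {l \<in> lines2. cnt l = i}" by simp
    then show ?thesis unfolding acnt by (auto simp: card_eq_0_iff)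
  qed
  have l0: "(1,0,0) \<in> (lines2 :: ('a \<times> 'a \<times> 'a) set)" by (simp add: lines2_def P2_def)
  have "cnt (1,0,0) \<le> CARD('a) + 1"
  proof -
    have sub: "{p \<in> rat_points d F. on_line (1,0,0) p} \<subseteq> insert (0,0,1) (range (\<lambda>z::'a. (0::'a,1::'a,z)))"
      by (auto simp: rat_points_def P2_def on_line_def)
    have "cnt (1,0,0) \<le> card (insert (0,0,1) (range (\<lambda>z::'a. (0::'a,1::'a,z))))"
      unfolding cnt_def by (rule card_mono[OF _ sub]) simp
    also have "\<dots> \<le> Suc (card (range (\<lambda>z::'a. (0::'a,1::'a,z))))" by (rule card_insert_le_m1) auto
    also have "card (range (\<lambda>z::'a. (0::'a,1::'a,z))) \<le> CARD('a)" by (rule card_image_le) simp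
    finally show ?thesis by simp
  qed
  then have "cnt (1,0,0) \<in> S" unfolding S_def using acnt_ne l0 by auto
  then have Sne: "S \<noteq> {}" by auto
  have k1: "k0 d F = 1" using nk assms(6) by (simp add: d_def)
  have "1 \<in> S" using Min_in[OF finS Sne] k0S k1 by simp
  then obtain l where l: "l \<in> lines2" "cnt l = 1" unfolding S_def using acnt_ne by auto
  then obtain P where lP: "{p \<in> rat_points d F. on_line l p} = {P}" unfolding cnt_def
    by (auto simp: card_Suc_eq)
  have P: "P \<in> P2" using lP by (auto simp: rat_points_def)
  have "0 \<notin> S"
  proof
    assume "0 \<in> S"
    then have "Min S \<le> 0" using Min_le[OF finS] by blast
    then show False using k0S k1 by simp
  qed
  then have "a_count d F 0 = 0" by (simp add: S_def)
  then have "\<not> (\<exists>l\<in>lines2. cnt l = 0)" using acnt_ne[of 0] by blast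
  then have allL: "\<forall>L\<in>lines2. {p \<in> rat_points d F. on_line L p} \<noteq> {}"
    by (auto simp: cnt_def)
  obtain Gc :: "'a form3" where Gall: "homog_form d Gc
     \<and> card {p\<in>P2. eval_form d Gc p = 0} = card (rat_points d F)
     \<and> (\<forall>z. eval_form d Gc (0,1,z) \<noteq> 0)
     \<and> eval_form d Gc (0,0,1) = 0
     \<and> (\<forall>L. L \<noteq> (0,0,0) \<longrightarrow> (\<exists>p\<in>P2. on_line L p \<and> eval_form d Gc p = 0))
     \<and> (\<forall>c. \<not> (\<forall>z. eval_form d Gc (1,c,z) = 0))"
    using transfer[OF d_def q3 hF nlc l(1) P lP allL] by (rule exE) (erule that)
  note G = conjunct1[OF Gall] conjunct1[OF conjunct2[OF Gall]]
    conjunct1[OF conjunct2[OF conjunct2[OF Gall]]]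
    conjunct1[OF conjunct2[OF conjunct2[OF conjunct2[OF Gall]]]]
    conjunct1[OF conjunct2[OF conjunct2[OF conjunct2[OF conjunct2[OF Gall]]]]]
    conjunct2[OF conjunct2[OF conjunct2[OF conjunct2[OF conjunct2[OF Gall]]]]]
  show False
    by (rule core[OF d_def q7 G(1) _ G(3) G(4) G(5) G(6)]) (use G(2) NqF in simp)
qed

end
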